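(* Let $\alpha\in(0,1)$. Let $K\in\operatorname{Lip}(\Delta)$ be nonvanishing at the diagonal. There is $\eta\in[0,1)$ depending only on $\alpha$, $\inf_x|K(x,x)|$, $\sup_\Delta|K|$, and $\operatorname{lip}_1(K)$ so that $I^\alpha_K\colon L^1_\eta\to L^1_\eta$ is injective. The result remains true if $\eta$ is increased.
   Context: Let $\Delta=\{(x,y);0\leq x\leq y\leq 1\}$; $\operatorname{Lip}(\Delta)$ is the space of Lipschitz functions $\Delta\to\mathbb R$ and $\operatorname{lip}_1$ the Lipschitz constant in the first variable. $I^\alpha_K f(x)=\int_x^1(y-x)^{-\alpha}K(x,y)f(y)\,\mathrm dy$, and $L^1_\eta=L^1([\eta,1])$ (the transform acting on functions on $[\eta,1]$). *)

theory Defs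
  imports "HOL-Analysis.Analysis"
begin

definition Delta :: "(real \<times> real) set" where
  "Delta = {(x, y). 0 \<le> x \<and> x \<le> y \<and> y \<le> 1}"

definition Lip_Delta :: "(real \<Rightarrow> real \<Rightarrow> real) \<Rightarrow> bool" where
  "Lip_Delta K \<longleftrightarrow> (\<exists>C. C-lipschitz_on Delta (\<lambda>(x, y). K x y))"

definition diag_inf :: "(real \<Rightarrow> real \<Rightarrow> real) \<Rightarrow> real" where
  "diag_inf K = (INF x\<in>{0..1}. \<bar>K x x\<bar>)"

definition sup_abs :: "(real \<Rightarrow> real \<Rightarrow> real) \<Rightarrow> real" where
  "sup_abs K = (SUP p\<in>Delta. \<bar>K (fst p) (snd p)\<bar>)"

definition lip1 :: "(real \<Rightarrow> real \<Rightarrow> real) \<Rightarrow> real" where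
  "lip1 K = (SUP p\<in>{(x, x', y). (x, y) \<in> Delta \<and> (x', y) \<in> Delta \<and> x \<noteq> x'}.
     \<bar>K (fst p) (snd (snd p)) - K (fst (snd p)) (snd (snd p))\<bar> / \<bar>fst p - fst (snd p)\<bar>)"

definition frac_op :: "real \<Rightarrow> (real \<Rightarrow> real \<Rightarrow> real) \<Rightarrow> (real \<Rightarrow> real) \<Rightarrow> real \<Rightarrow> real" where
  "frac_op \<alpha> K f x = (LINT y:{x..1}|lborel. (y - x) powr (-\<alpha>) * K x y * f y)"

definition inj_L1 :: "real \<Rightarrow> (real \<Rightarrow> real \<Rightarrow> real) \<Rightarrow> real \<Rightarrow> bool" where
  "inj_L1 \<alpha> K \<eta> \<longleftrightarrow>
     (\<forall>f g. set_integrable lborel {\<eta>..1} f \<longrightarrow> set_integrable lborel {\<eta>..1} g \<longrightarrow>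
        (AE x in lborel. x \<in> {\<eta>..1} \<longrightarrow> frac_op \<alpha> K f x = frac_op \<alpha> K g x) \<longrightarrow>
        (AE x in lborel. x \<in> {\<eta>..1} \<longrightarrow> f x = g x))"

end

theory Submission
  imports Defs
begin

lemma Delta_mem[simp]: "(x,y) \<in> Delta \<longleftrightarrow> 0 \<le> x \<and> x \<le> y \<and> y \<le> 1"
  by (simp add: Delta_def)

lemma closed_Delta: "closed Delta"
proof -
  have "Delta = {p. 0 \<le> fst p} \<inter> {p. fst p \<le> snd p} \<inter> {p. snd p \<le> 1}"
    by (auto simp: Delta_def)
  moreover have "closed ({p::real\<times>real. 0 \<le> fst p} \<inter> {p. fst p \<le> snd p} \<inter> {p. snd p \<le> 1})"
    by (intro closed_Int closed_Collect_le continuous_intros)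
  ultimately show ?thesis by simp
qed

lemma Lip_DeltaE:
  assumes "Lip_Delta K"
  obtains C where "C-lipschitz_on Delta (\<lambda>(x, y). K x y)"
  using assms by (auto simp: Lip_Delta_def)

lemma K_cont: "Lip_Delta K \<Longrightarrow> continuous_on Delta (\<lambda>(x,y). K x y)"
proof -
  assume "Lip_Delta K"
  then obtain C where "C-lipschitz_on Delta (\<lambda>(x, y). K x y)" by (rule Lip_DeltaE)
  then show ?thesis by (rule lipschitz_on_continuous_on)
qed

lemma K_cont_diag: "Lip_Delta K \<Longrightarrow> continuous_on {0..1} (\<lambda>x. K x x)"
proof -
  assume "Lip_Delta K"
  then have c: "continuous_on Delta (\<lambda>(x,y). K x y)" by (rule K_cont)
  have "continuous_on {0..1} ((\<lambda>(x,y). K x y) \<circ> (\<lambda>x. (x,x)))"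
    by (rule continuous_on_compose) (auto intro!: continuous_intros continuous_on_subset[OF c])
  then show ?thesis by (simp add: o_def)
qed

lemma dist_pair_le: "dist (a::real, b::real) (c, d) \<le> \<bar>a - c\<bar> + \<bar>b - d\<bar>"
proof -
  have "dist (a, b) (c, d) = sqrt ((dist a c)\<^sup>2 + (dist b d)\<^sup>2)" by (simp add: dist_Pair_Pair)
  also have "\<dots> \<le> \<bar>dist a c\<bar> + \<bar>dist b d\<bar>" by (rule sqrt_sum_squares_le_sum_abs)
  finally show ?thesis by (simp add: dist_real_def)
qed
lemma K_bounded:
  assumes "Lip_Delta K"
  shows "bdd_above ((\<lambda>p. \<bar>K (fst p) (snd p)\<bar>) ` Delta)"
proof -
  obtain C where C: "C-lipschitz_on Delta (\<lambda>(x, y). K x y)" using assms(1) by (rule Lip_DeltaE)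
  have "\<bar>K x y\<bar> \<le> \<bar>K 0 0\<bar> + C * 2" if "(x,y) \<in> Delta" for x y
  proof -
    have "dist (K x y) (K 0 0) \<le> C * dist (x,y) (0,0)"
      using lipschitz_onD[OF C that, of "(0,0)"] by simp
    moreover have "dist (x,y) (0::real,0::real) \<le> 2"
      using dist_pair_le[of x y 0 0] that by simp
    moreover have "C \<ge> 0" using C lipschitz_on_nonneg by blast
    ultimately have "dist (K x y) (K 0 0) \<le> C * 2"
      by (meson mult_left_mono order_trans)
    then show ?thesis by (simp add: dist_real_def)
  qed
  then show ?thesis by (intro bdd_aboveI2[where M="\<bar>K 0 0\<bar> + C * 2"]) auto
qed

lemma K_le_sup:
  assumes "Lip_Delta K" "(x,y) \<in> Delta"
  shows "\<bar>K x y\<bar> \<le> sup_abs K"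
  unfolding sup_abs_def
  using cSUP_upper[OF assms(2) K_bounded[OF assms(1)]] by simp

lemma K_lip1:
  assumes "Lip_Delta K" "(x,y) \<in> Delta" "(x',y) \<in> Delta"
  shows "\<bar>K x y - K x' y\<bar> \<le> lip1 K * \<bar>x - x'\<bar>"
proof (cases "x = x'")
  case True
  have "lip1 K \<ge> 0"
  proof -
    have "(0::real, 1::real, 1::real) \<in> {(x, x', y). (x, y) \<in> Delta \<and> (x', y) \<in> Delta \<and> x \<noteq> x'}"
      by simp
    obtain C where C: "C-lipschitz_on Delta (\<lambda>(x, y). K x y)" using assms(1) by (rule Lip_DeltaE)
    have bdd: "bdd_above ((\<lambda>p. \<bar>K (fst p) (snd (snd p)) - K (fst (snd p)) (snd (snd p))\<bar> / \<bar>fst p - fst (snd p)\<bar>) `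
       {(x, x', y). (x, y) \<in> Delta \<and> (x', y) \<in> Delta \<and> x \<noteq> x'})"
    proof (rule bdd_aboveI2)
      fix p assume "p \<in> {(x, x', y). (x, y) \<in> Delta \<and> (x', y) \<in> Delta \<and> x \<noteq> x'}"
      then obtain a b c where p: "p = (a,b,c)" "(a,c) \<in> Delta" "(b,c) \<in> Delta" "a \<noteq> b" by auto
      have "dist (K a c) (K b c) \<le> C * dist (a,c) (b,c)"
        using lipschitz_onD[OF C p(2) p(3)] by simp
      then have "\<bar>K a c - K b c\<bar> \<le> C * \<bar>a - b\<bar>" by (simp add: dist_real_def dist_Pair_Pair)
      moreover have "\<bar>a - b\<bar> > 0" using p(4) by simp
      ultimately have "\<bar>K a c - K b c\<bar> / \<bar>a - b\<bar> \<le> C" by (simp add: pos_divide_le_eq)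
      then show "\<bar>K (fst p) (snd (snd p)) - K (fst (snd p)) (snd (snd p))\<bar> / \<bar>fst p - fst (snd p)\<bar> \<le> C"
        using p(1) by simp
    qed
    have "0 \<le> \<bar>K 0 1 - K 1 1\<bar> / \<bar>0 - 1\<bar>" by simp
    also have "\<dots> \<le> lip1 K" unfolding lip1_def
      using cSUP_upper[OF \<open>(0, 1, 1) \<in> _\<close> bdd] by simp
    finally show ?thesis .
  qed
  with True show ?thesis by simp
next
  case False
  obtain C where C: "C-lipschitz_on Delta (\<lambda>(x, y). K x y)" using assms(1) by (rule Lip_DeltaE)
  have bdd: "bdd_above ((\<lambda>p. \<bar>K (fst p) (snd (snd p)) - K (fst (snd p)) (snd (snd p))\<bar> / \<bar>fst p - fst (snd p)\<bar>) `
     {(x, x', y). (x, y) \<in> Delta \<and> (x', y) \<in> Delta \<and> x \<noteq> x'})"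
  proof (rule bdd_aboveI2)
    fix p assume "p \<in> {(x, x', y). (x, y) \<in> Delta \<and> (x', y) \<in> Delta \<and> x \<noteq> x'}"
    then obtain a b c where p: "p = (a,b,c)" "(a,c) \<in> Delta" "(b,c) \<in> Delta" "a \<noteq> b" by auto
    have "dist (K a c) (K b c) \<le> C * dist (a,c) (b,c)"
      using lipschitz_onD[OF C p(2) p(3)] by simp
    then have "\<bar>K a c - K b c\<bar> \<le> C * \<bar>a - b\<bar>" by (simp add: dist_real_def dist_Pair_Pair)
    moreover have "\<bar>a - b\<bar> > 0" using p(4) by simp
    ultimately have "\<bar>K a c - K b c\<bar> / \<bar>a - b\<bar> \<le> C" by (simp add: pos_divide_le_eq)
    then show "\<bar>K (fst p) (snd (snd p)) - K (fst (snd p)) (snd (snd p))\<bar> / \<bar>fst p - fst (snd p)\<bar> \<le> C"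
      using p(1) by simp
  qed
  have mem: "(x, x', y) \<in> {(x, x', y). (x, y) \<in> Delta \<and> (x', y) \<in> Delta \<and> x \<noteq> x'}"
    using assms False by simp
  have "\<bar>K x y - K x' y\<bar> / \<bar>x - x'\<bar> \<le> lip1 K" unfolding lip1_def
    using cSUP_upper[OF mem bdd] by simp
  moreover have "\<bar>x - x'\<bar> > 0" using False by simp
  ultimately show ?thesis by (simp add: pos_divide_le_eq)
qed

lemma lip1_nonneg: "Lip_Delta K \<Longrightarrow> lip1 K \<ge> 0"
  using K_lip1[of K 0 1 1] by simp

lemma diag_inf_props:
  assumes "Lip_Delta K" "\<forall>x\<in>{0..1}. K x x \<noteq> 0"
  shows "diag_inf K > 0" "\<And>x. x \<in> {0..1} \<Longrightarrow> diag_inf K \<le> \<bar>K x x\<bar>"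
proof -
  have c: "continuous_on {0..1} (\<lambda>x. \<bar>K x x\<bar>)"
    using K_cont_diag[OF assms(1)] by (intro continuous_intros)
  obtain x0 where x0: "x0 \<in> {0..1}" "\<And>y. y \<in> {0..1} \<Longrightarrow> \<bar>K x0 x0\<bar> \<le> \<bar>K y y\<bar>"
    using continuous_attains_inf[OF compact_Icc _ c] by auto
  have eq: "diag_inf K = \<bar>K x0 x0\<bar>" unfolding diag_inf_def
  proof (rule antisym)
    show "(INF x\<in>{0..1}. \<bar>K x x\<bar>) \<le> \<bar>K x0 x0\<bar>"
      by (rule cINF_lower[OF bdd_belowI2[where m=0] x0(1)]) simp
    show "\<bar>K x0 x0\<bar> \<le> (INF x\<in>{0..1}. \<bar>K x x\<bar>)"
      by (rule cINF_greatest) (simp, rule x0(2))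
  qed
  have "K x0 x0 \<noteq> 0" using assms(2) x0(1) by blast
  then show "diag_inf K > 0" unfolding eq by simp
  show "\<And>x. x \<in> {0..1} \<Longrightarrow> diag_inf K \<le> \<bar>K x x\<bar>" unfolding eq by (rule x0(2))
qed


definition wt :: "real \<Rightarrow> real \<Rightarrow> real" where
  "wt \<alpha> s = s powr (\<alpha> - 1) * (1 - s) powr (- \<alpha>)"

lemma wt_nonneg: "wt \<alpha> s \<ge> 0" by (simp add: wt_def)

lemma wt_eq: "wt \<alpha> = (\<lambda>t. t powr (\<alpha> - 1) * (1 - t) powr ((1 - \<alpha>) - 1))"
  by (rule ext) (simp add: wt_def)

lemma wt_int: "0 < \<alpha> \<Longrightarrow> \<alpha> < 1 \<Longrightarrow> set_integrable lborel {0..1} (wt \<alpha>)"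
  unfolding wt_eq by (rule integrable_Beta) auto

lemma wt_integral: "0 < \<alpha> \<Longrightarrow> \<alpha> < 1 \<Longrightarrow> (LINT s:{0..1}|lborel. wt \<alpha> s) = Beta \<alpha> (1 - \<alpha>)"
proof -
  assume a: "0 < \<alpha>" "\<alpha> < 1"
  have "(LINT s:{0..1}|lborel. wt \<alpha> s) = integral {0..1} (wt \<alpha>)"
    by (rule set_borel_integral_eq_integral(2)[OF wt_int[OF a]])
  also have "\<dots> = Beta \<alpha> (1 - \<alpha>)"
    unfolding wt_eq by (rule integral_unique, rule has_integral_Beta_real) (use a in auto)
  finally show ?thesis .
qed

lemma Beta_pos: "0 < (\<alpha>::real) \<Longrightarrow> \<alpha> < 1 \<Longrightarrow> Beta \<alpha> (1 - \<alpha>) > 0"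
proof -
  assume a: "0 < \<alpha>" "\<alpha> < 1"
  have "Gamma \<alpha> > 0" "Gamma (1 - \<alpha>) > 0" using a by simp_all
  then show ?thesis by (simp add: Beta_def)
qed

lemma sub_pointwise:
  assumes "x < y"
  shows "\<bar>y - x\<bar> * (indicator {x..y} (x + (y - x) * s) *
      ((x + (y - x) * s - x) powr (\<alpha> - 1) * (y - (x + (y - x) * s)) powr (- \<alpha>) * \<phi> (x + (y - x) * s)))
    = indicator {0..1} s * (wt \<alpha> s * \<phi> (x + (y - x) * s))"
proof -
  define d where "d = y - x"
  have d: "d > 0" using assms by (simp add: d_def)
  have ind: "indicator {x..y} (x + d * s) = (indicator {0..1} s :: real)"
  proof -
    have yd: "y = x + d" by (simp add: d_def)
    have "x \<le> x + d * s \<longleftrightarrow> 0 \<le> s" using d by (simp add: zero_le_mult_iff)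
    moreover have "x + d * s \<le> y \<longleftrightarrow> s \<le> 1" unfolding yd using d by simp
    ultimately have "x + d * s \<in> {x..y} \<longleftrightarrow> s \<in> {0..1}" by auto
    then show ?thesis by (simp add: indicator_def)
  qed
  show ?thesis
  proof (cases "s \<in> {0..1}")
    case False
    then show ?thesis using ind by (simp add: d_def[symmetric])
  next
    case True
    have e1: "x + d * s - x = d * s" by simp
    have e2: "y - (x + d * s) = d * (1 - s)" by (simp add: d_def algebra_simps)
    have p1: "(d * s) powr (\<alpha> - 1) = d powr (\<alpha> - 1) * s powr (\<alpha> - 1)"
      using True d by (metis atLeastAtMost_iff diff_ge_0_iff_ge less_eq_real_def powr_mult)
    have p2: "(d * (1 - s)) powr (- \<alpha>) = d powr (- \<alpha>) * (1 - s) powr (- \<alpha>)"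
      using True d by (metis atLeastAtMost_iff diff_ge_0_iff_ge less_eq_real_def powr_mult)
    have p3: "d * (d powr (\<alpha> - 1) * d powr (- \<alpha>)) = 1"
    proof -
      have "d powr (\<alpha> - 1) * d powr (- \<alpha>) = d powr (-1)" by (simp add: powr_add[symmetric])
      also have "\<dots> = 1 / d" using d by (simp add: powr_minus_divide)
      finally show ?thesis using d by simp
    qed
    have "\<bar>d\<bar> * (indicator {x..y} (x + d * s) *
      ((x + d * s - x) powr (\<alpha> - 1) * (y - (x + d * s)) powr (- \<alpha>) * \<phi> (x + d * s)))
      = (d * (d powr (\<alpha> - 1) * d powr (- \<alpha>))) * (s powr (\<alpha> - 1) * (1 - s) powr (- \<alpha>) * \<phi> (x + d * s))"
      using True d ind unfolding e1 e2 p1 p2 by (simp add: indicator_def)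
    also have "\<dots> = indicator {0..1} s * (wt \<alpha> s * \<phi> (x + d * s))"
      using True p3 by (simp add: wt_def)
    finally show ?thesis by (simp add: d_def)
  qed
qed

lemma sub_integral:
  assumes "x < y"
  shows "(LINT t:{x..y}|lborel. (t - x) powr (\<alpha> - 1) * (y - t) powr (- \<alpha>) * \<phi> t)
       = (LINT s:{0..1}|lborel. wt \<alpha> s * \<phi> (x + (y - x) * s))"
proof -
  have ne: "y - x \<noteq> 0" using assms by simp
  define F where "F = (\<lambda>t. indicator {x..y} t * ((t - x) powr (\<alpha> - 1) * (y - t) powr (- \<alpha>) * \<phi> t))"
  have L: "integral\<^sup>L lborel F = \<bar>y - x\<bar> *\<^sub>R (\<integral>s. F (x + (y - x) * s) \<partial>lborel)"
    by (rule lborel_integral_real_affine[OF ne])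
  have L2: "\<bar>y - x\<bar> *\<^sub>R (\<integral>s. F (x + (y - x) * s) \<partial>lborel) = (\<integral>s. \<bar>y - x\<bar> * F (x + (y - x) * s) \<partial>lborel)"
    by (simp only: real_scaleR_def integral_mult_right_zero)
  have E: "(\<lambda>s. \<bar>y - x\<bar> * F (x + (y - x) * s)) = (\<lambda>s. indicator {0..1} s * (wt \<alpha> s * \<phi> (x + (y - x) * s)))"
    unfolding F_def by (rule ext) (rule sub_pointwise[OF assms])
  have G1: "(LINT t:{x..y}|lborel. (t - x) powr (\<alpha> - 1) * (y - t) powr (- \<alpha>) * \<phi> t) = integral\<^sup>L lborel F"
    unfolding set_lebesgue_integral_def F_def by simp
  have G2: "(LINT s:{0..1}|lborel. wt \<alpha> s * \<phi> (x + (y - x) * s)) =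
     (\<integral>s. indicator {0..1} s * (wt \<alpha> s * \<phi> (x + (y - x) * s)) \<partial>lborel)"
    unfolding set_lebesgue_integral_def by simp
  show ?thesis unfolding G1 G2 L L2 E ..
qed

lemma sub_integrable:
  assumes "x < y"
  shows "set_integrable lborel {x..y} (\<lambda>t. (t - x) powr (\<alpha> - 1) * (y - t) powr (- \<alpha>) * \<phi> t)
     \<longleftrightarrow> set_integrable lborel {0..1} (\<lambda>s. wt \<alpha> s * \<phi> (x + (y - x) * s))"
proof -
  have ne: "y - x \<noteq> 0" using assms by simp
  define F where "F = (\<lambda>t. indicator {x..y} t * ((t - x) powr (\<alpha> - 1) * (y - t) powr (- \<alpha>) * \<phi> t))"
  have L: "integrable lborel (\<lambda>s. F (x + (y - x) * s)) \<longleftrightarrow> integrable lborel F"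
    by (rule lborel_integrable_real_affine_iff[OF ne])
  have L2: "integrable lborel (\<lambda>s. \<bar>y - x\<bar> * F (x + (y - x) * s)) \<longleftrightarrow> integrable lborel (\<lambda>s. F (x + (y - x) * s))"
    using ne by (subst integrable_mult_left_iff) simp
  have E: "(\<lambda>s. \<bar>y - x\<bar> * F (x + (y - x) * s)) = (\<lambda>s. indicator {0..1} s * (wt \<alpha> s * \<phi> (x + (y - x) * s)))"
    unfolding F_def by (rule ext) (rule sub_pointwise[OF assms])
  have G1: "set_integrable lborel {x..y} (\<lambda>t. (t - x) powr (\<alpha> - 1) * (y - t) powr (- \<alpha>) * \<phi> t) \<longleftrightarrow> integrable lborel F"
    unfolding set_integrable_def F_def by simp
  have G2: "set_integrable lborel {0..1} (\<lambda>s. wt \<alpha> s * \<phi> (x + (y - x) * s)) \<longleftrightarrow>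
     integrable lborel (\<lambda>s. indicator {0..1} s * (wt \<alpha> s * \<phi> (x + (y - x) * s)))"
    unfolding set_integrable_def by simp
  show ?thesis using L L2[unfolded E] G1 G2 by blast
qed


lemma seg_bound:
  assumes a: "0 < \<alpha>" "\<alpha> < 1" and c: "continuous_on {0..1} \<psi>" and b: "\<forall>s\<in>{0..1}. \<bar>\<psi> s\<bar> \<le> P"
  shows "set_integrable lborel {0..1} (\<lambda>s. wt \<alpha> s * \<psi> s)"
    and "\<bar>LINT s:{0..1}|lborel. wt \<alpha> s * \<psi> s\<bar> \<le> Beta \<alpha> (1 - \<alpha>) * P"
proof -
  have wi: "integrable lborel (\<lambda>s. indicator {0..1} s * wt \<alpha> s)"
    using wt_int[OF a] unfolding set_integrable_def by simp
  have m1: "(\<lambda>s. indicator {0..1} s *\<^sub>R \<psi> s) \<in> borel_measurable borel"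
    by (rule borel_measurable_continuous_on_indicator[OF _ c]) simp
  have m2: "wt \<alpha> \<in> borel_measurable borel"
    unfolding wt_def by measurable
  have meas: "(\<lambda>s. indicator {0..1} s * (wt \<alpha> s * \<psi> s)) \<in> borel_measurable lborel"
  proof -
    have "(\<lambda>s. wt \<alpha> s * (indicator {0..1} s *\<^sub>R \<psi> s)) \<in> borel_measurable borel"
      using m1 m2 by measurable
    moreover have "(\<lambda>s. wt \<alpha> s * (indicator {0..1} s *\<^sub>R \<psi> s)) = (\<lambda>s. indicator {0..1} s * (wt \<alpha> s * \<psi> s))"
      by (rule ext) (simp add: indicator_def)
    ultimately show ?thesis by simp
  qed
  have "\<bar>\<psi> 0\<bar> \<le> P" using b by simp
  then have P0: "P \<ge> 0" by (rule order_trans[OF abs_ge_zero])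
  have bnd: "\<And>s. norm (indicator {0..1} s * (wt \<alpha> s * \<psi> s)) \<le> P * (indicator {0..1} s * wt \<alpha> s)"
  proof -
    fix s :: real
    show "norm (indicator {0..1} s * (wt \<alpha> s * \<psi> s)) \<le> P * (indicator {0..1} s * wt \<alpha> s)"
    proof (cases "s \<in> {0..1}")
      case True
      then have "\<bar>\<psi> s\<bar> \<le> P" using b by blast
      have "norm (indicator {0..1} s * (wt \<alpha> s * \<psi> s)) = wt \<alpha> s * \<bar>\<psi> s\<bar>"
        using True wt_nonneg[of \<alpha> s] by (simp add: abs_mult)
      also have "\<dots> \<le> wt \<alpha> s * P" by (rule mult_left_mono[OF \<open>\<bar>\<psi> s\<bar> \<le> P\<close> wt_nonneg])
      also have "\<dots> = P * (indicator {0..1} s * wt \<alpha> s)" using True by simp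
      finally show ?thesis .
    qed simp
  qed
  have int: "integrable lborel (\<lambda>s. indicator {0..1} s * (wt \<alpha> s * \<psi> s))"
    by (rule Bochner_Integration.integrable_bound[OF integrable_mult_right[OF wi, of P] meas])
       (intro AE_I2, metis bnd abs_ge_self order_trans real_norm_def)
  then show "set_integrable lborel {0..1} (\<lambda>s. wt \<alpha> s * \<psi> s)"
    unfolding set_integrable_def by simp
  have "\<bar>LINT s:{0..1}|lborel. wt \<alpha> s * \<psi> s\<bar> = norm (\<integral>s. indicator {0..1} s * (wt \<alpha> s * \<psi> s) \<partial>lborel)"
    unfolding set_lebesgue_integral_def by simp
  also have "\<dots> \<le> \<integral>s. norm (indicator {0..1} s * (wt \<alpha> s * \<psi> s)) \<partial>lborel"
    by (rule integral_norm_bound)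
  also have "\<dots> \<le> \<integral>s. P * (indicator {0..1} s * wt \<alpha> s) \<partial>lborel"
    by (rule integral_mono[OF integrable_norm[OF int] integrable_mult_right[OF wi]]) (rule bnd)
  also have "\<dots> = P * (LINT s:{0..1}|lborel. wt \<alpha> s)"
    unfolding set_lebesgue_integral_def by simp
  also have "\<dots> = Beta \<alpha> (1 - \<alpha>) * P" using wt_integral[OF a] by simp
  finally show "\<bar>LINT s:{0..1}|lborel. wt \<alpha> s * \<psi> s\<bar> \<le> Beta \<alpha> (1 - \<alpha>) * P" .
qed

lemma seg_in_Delta:
  assumes "0 \<le> x" "x \<le> y" "y \<le> 1" "s \<in> {0..1}"
  shows "(x + (y - x) * s, y) \<in> Delta"
proof -
  have "(y - x) * s \<le> (y - x) * 1" using assms by (intro mult_left_mono) auto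
  moreover have "0 \<le> (y - x) * s" using assms by simp
  ultimately show ?thesis using assms by simp
qed

lemma seg_cont:
  assumes "Lip_Delta K" "0 \<le> x" "x \<le> y" "y \<le> 1"
  shows "continuous_on {0..1} (\<lambda>s. K (x + (y - x) * s) y)"
proof -
  have c: "continuous_on Delta (\<lambda>(x,y). K x y)" using assms(1) by (rule K_cont)
  have "continuous_on {0..1} ((\<lambda>(x,y). K x y) \<circ> (\<lambda>s. (x + (y - x) * s, y)))"
  proof (rule continuous_on_compose)
    show "continuous_on {0..1} (\<lambda>s. (x + (y - x) * s, y))" by (intro continuous_intros)
    have "(\<lambda>s. (x + (y - x) * s, y)) ` {0..1} \<subseteq> Delta"
      using seg_in_Delta[OF assms(2-4)] by blast
    then show "continuous_on ((\<lambda>s. (x + (y - x) * s, y)) ` {0..1}) (\<lambda>(x, y). K x y)"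
      by (rule continuous_on_subset[OF c])
  qed
  then show ?thesis by (simp add: o_def)
qed


definition kk :: "real \<Rightarrow> (real \<Rightarrow> real \<Rightarrow> real) \<Rightarrow> real \<Rightarrow> real \<Rightarrow> real" where
  "kk \<alpha> K x y = (LINT s:{0..1}|lborel. wt \<alpha> s * K (x + (y - x) * s) y)"

context
  fixes \<alpha> :: real and K :: "real \<Rightarrow> real \<Rightarrow> real"
  assumes a: "0 < \<alpha>" "\<alpha> < 1" and LK: "Lip_Delta K"
begin

lemma kk_int:
  assumes "0 \<le> x" "x \<le> y" "y \<le> 1"
  shows "set_integrable lborel {0..1} (\<lambda>s. wt \<alpha> s * K (x + (y - x) * s) y)"
    and "\<bar>kk \<alpha> K x y\<bar> \<le> Beta \<alpha> (1 - \<alpha>) * sup_abs K"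
proof -
  have b: "\<forall>s\<in>{0..1}. \<bar>K (x + (y - x) * s) y\<bar> \<le> sup_abs K"
    using K_le_sup[OF LK seg_in_Delta[OF assms]] by blast
  show "set_integrable lborel {0..1} (\<lambda>s. wt \<alpha> s * K (x + (y - x) * s) y)"
    by (rule seg_bound(1)[OF a seg_cont[OF LK assms] b])
  show "\<bar>kk \<alpha> K x y\<bar> \<le> Beta \<alpha> (1 - \<alpha>) * sup_abs K"
    unfolding kk_def by (rule seg_bound(2)[OF a seg_cont[OF LK assms] b])
qed

lemma kk_diff:
  assumes "0 \<le> x" "x \<le> y" "y \<le> 1" "0 \<le> x'" "x' \<le> y'" "y' \<le> 1"
  shows "kk \<alpha> K x y - kk \<alpha> K x' y' = (LINT s:{0..1}|lborel. wt \<alpha> s * (K (x + (y - x) * s) y - K (x' + (y' - x') * s) y'))"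
proof -
  have "(LINT s:{0..1}|lborel. wt \<alpha> s * (K (x + (y - x) * s) y - K (x' + (y' - x') * s) y'))
      = (LINT s:{0..1}|lborel. wt \<alpha> s * K (x + (y - x) * s) y - wt \<alpha> s * K (x' + (y' - x') * s) y')"
    by (simp add: right_diff_distrib)
  also have "\<dots> = kk \<alpha> K x y - kk \<alpha> K x' y'"
    unfolding kk_def by (rule set_integral_diff(2)[OF kk_int(1)[OF assms(1-3)] kk_int(1)[OF assms(4-6)]])
  finally show ?thesis by simp
qed

lemma kk_diag:
  assumes "0 \<le> x" "x \<le> y" "y \<le> 1"
  shows "\<bar>kk \<alpha> K x y - Beta \<alpha> (1 - \<alpha>) * K y y\<bar> \<le> Beta \<alpha> (1 - \<alpha>) * (lip1 K * (y - x))"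
proof -
  have yy: "0 \<le> y" "y \<le> y" "y \<le> 1" using assms by auto
  have "kk \<alpha> K y y = Beta \<alpha> (1 - \<alpha>) * K y y"
    unfolding kk_def using wt_integral[OF a] by simp
  then have eq: "kk \<alpha> K x y - Beta \<alpha> (1 - \<alpha>) * K y y = (LINT s:{0..1}|lborel. wt \<alpha> s * (K (x + (y - x) * s) y - K (y + (y - y) * s) y))"
    using kk_diff[OF assms yy] by simp
  have c: "continuous_on {0..1} (\<lambda>s. K (x + (y - x) * s) y - K (y + (y - y) * s) y)"
    by (intro continuous_intros seg_cont[OF LK assms] seg_cont[OF LK yy])
  have b: "\<forall>s\<in>{0..1}. \<bar>K (x + (y - x) * s) y - K (y + (y - y) * s) y\<bar> \<le> lip1 K * (y - x)"
  proof
    fix s :: real assume s: "s \<in> {0..1}"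
    have "\<bar>K (x + (y - x) * s) y - K (y + (y - y) * s) y\<bar> \<le> lip1 K * \<bar>(x + (y - x) * s) - (y + (y - y) * s)\<bar>"
      by (rule K_lip1[OF LK seg_in_Delta[OF assms s] seg_in_Delta[OF yy s]])
    also have "\<bar>(x + (y - x) * s) - (y + (y - y) * s)\<bar> = (y - x) * (1 - s)"
    proof -
      have "(x + (y - x) * s) - (y + (y - y) * s) = - ((y - x) * (1 - s))" by (simp add: algebra_simps)
      moreover have "(y - x) * (1 - s) \<ge> 0" using s assms by simp
      ultimately show ?thesis by simp
    qed
    also have "lip1 K * ((y - x) * (1 - s)) \<le> lip1 K * (y - x)"
      using s assms lip1_nonneg[OF LK] by (intro mult_left_mono mult_left_le) auto
    finally show "\<bar>K (x + (y - x) * s) y - K (y + (y - y) * s) y\<bar> \<le> lip1 K * (y - x)" .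
  qed
  show ?thesis unfolding eq by (rule seg_bound(2)[OF a c b])
qed

lemma kk_lip1:
  assumes "0 \<le> x" "x \<le> y" "y \<le> 1" "0 \<le> x'" "x' \<le> y"
  shows "\<bar>kk \<alpha> K x y - kk \<alpha> K x' y\<bar> \<le> Beta \<alpha> (1 - \<alpha>) * (lip1 K * \<bar>x - x'\<bar>)"
proof -
  have as2: "0 \<le> x'" "x' \<le> y" "y \<le> 1" using assms by auto
  have c: "continuous_on {0..1} (\<lambda>s. K (x + (y - x) * s) y - K (x' + (y - x') * s) y)"
    by (intro continuous_intros seg_cont[OF LK assms(1-3)] seg_cont[OF LK as2])
  have b: "\<forall>s\<in>{0..1}. \<bar>K (x + (y - x) * s) y - K (x' + (y - x') * s) y\<bar> \<le> lip1 K * \<bar>x - x'\<bar>"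
  proof
    fix s :: real assume s: "s \<in> {0..1}"
    have "\<bar>K (x + (y - x) * s) y - K (x' + (y - x') * s) y\<bar> \<le> lip1 K * \<bar>(x + (y - x) * s) - (x' + (y - x') * s)\<bar>"
      by (rule K_lip1[OF LK seg_in_Delta[OF assms(1-3) s] seg_in_Delta[OF as2 s]])
    also have "\<bar>(x + (y - x) * s) - (x' + (y - x') * s)\<bar> = \<bar>x - x'\<bar> * (1 - s)"
    proof -
      have "(x + (y - x) * s) - (x' + (y - x') * s) = (x - x') * (1 - s)" by (simp add: algebra_simps)
      then show ?thesis using s by (simp add: abs_mult)
    qed
    also have "lip1 K * (\<bar>x - x'\<bar> * (1 - s)) \<le> lip1 K * \<bar>x - x'\<bar>"
      using s lip1_nonneg[OF LK] by (intro mult_left_mono mult_left_le) auto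
    finally show "\<bar>K (x + (y - x) * s) y - K (x' + (y - x') * s) y\<bar> \<le> lip1 K * \<bar>x - x'\<bar>" .
  qed
  show ?thesis unfolding kk_diff[OF assms(1-3) as2] by (rule seg_bound(2)[OF a c b])
qed

lemma kk_cont_y:
  assumes "0 \<le> x" "x \<le> 1"
  shows "continuous_on {x..1} (kk \<alpha> K x)"
proof -
  obtain C where C: "C-lipschitz_on Delta (\<lambda>(x, y). K x y)" using LK by (rule Lip_DeltaE)
  have C0: "C \<ge> 0" using C lipschitz_on_nonneg by blast
  have "(Beta \<alpha> (1 - \<alpha>) * (C * 2))-lipschitz_on {x..1} (kk \<alpha> K x)"
  proof (rule lipschitz_onI)
    show "0 \<le> Beta \<alpha> (1 - \<alpha>) * (C * 2)" using Beta_pos[OF a] C0 by simp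
    fix y y' assume y: "y \<in> {x..1}" and y': "y' \<in> {x..1}"
    have as1: "0 \<le> x" "x \<le> y" "y \<le> 1" using y assms by auto
    have as2: "0 \<le> x" "x \<le> y'" "y' \<le> 1" using y' assms by auto
    have c: "continuous_on {0..1} (\<lambda>s. K (x + (y - x) * s) y - K (x + (y' - x) * s) y')"
      by (intro continuous_intros seg_cont[OF LK as1] seg_cont[OF LK as2])
    have b: "\<forall>s\<in>{0..1}. \<bar>K (x + (y - x) * s) y - K (x + (y' - x) * s) y'\<bar> \<le> C * 2 * dist y y'"
    proof
      fix s :: real assume s: "s \<in> {0..1}"
      have "dist (K (x + (y - x) * s) y) (K (x + (y' - x) * s) y') \<le> C * dist (x + (y - x) * s, y) (x + (y' - x) * s, y')"
        using lipschitz_onD[OF C seg_in_Delta[OF as1 s] seg_in_Delta[OF as2 s]] by simp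
      also have "dist (x + (y - x) * s, y) (x + (y' - x) * s, y') \<le> \<bar>(x + (y - x) * s) - (x + (y' - x) * s)\<bar> + \<bar>y - y'\<bar>"
        by (rule dist_pair_le)
      also have "\<bar>(x + (y - x) * s) - (x + (y' - x) * s)\<bar> = \<bar>y - y'\<bar> * s"
      proof -
        have "(x + (y - x) * s) - (x + (y' - x) * s) = (y - y') * s" by (simp add: algebra_simps)
        then show ?thesis using s by (simp add: abs_mult)
      qed
      also have "\<bar>y - y'\<bar> * s + \<bar>y - y'\<bar> \<le> 2 * dist y y'"
      proof -
        have "\<bar>y - y'\<bar> * s \<le> \<bar>y - y'\<bar>" using s by (intro mult_left_le) auto
        then show ?thesis by (simp add: dist_real_def)
      qed
      finally show "\<bar>K (x + (y - x) * s) y - K (x + (y' - x) * s) y'\<bar> \<le> C * 2 * dist y y'"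
        using C0 by (simp add: dist_real_def mult_left_mono)
    qed
    have "dist (kk \<alpha> K x y) (kk \<alpha> K x y') = \<bar>kk \<alpha> K x y - kk \<alpha> K x y'\<bar>" by (simp add: dist_real_def)
    also have "\<dots> \<le> Beta \<alpha> (1 - \<alpha>) * (C * 2 * dist y y')"
      unfolding kk_diff[OF as1 as2] by (rule seg_bound(2)[OF a c b])
    finally show "dist (kk \<alpha> K x y) (kk \<alpha> K x y') \<le> Beta \<alpha> (1 - \<alpha>) * (C * 2) * dist y y'"
      by (simp add: mult.assoc)
  qed
  then show ?thesis by (rule lipschitz_on_continuous_on)
qed

end

context
  fixes \<alpha> :: real and K :: "real \<Rightarrow> real \<Rightarrow> real"
  assumes a: "0 < \<alpha>" "\<alpha> < 1" and LK: "Lip_Delta K"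
begin

lemma fub:
  fixes f :: "real \<Rightarrow> real" and a0 x :: real
  assumes a0: "0 \<le> a0" and fi: "set_integrable lborel {a0..1} f" and x: "a0 \<le> x" "x \<le> 1"
  shows "(LINT t:{x..1}|lborel. (t - x) powr (\<alpha> - 1) * frac_op \<alpha> K f t)
       = (LINT y:{x..1}|lborel. f y * kk \<alpha> K x y)"
    and "(\<lambda>t. indicator {x..1} t *\<^sub>R ((t - x) powr (\<alpha> - 1) * frac_op \<alpha> K f t)) \<in> borel_measurable borel"
proof -
  define T where "T = {(y, t). x \<le> t \<and> t \<le> y \<and> y \<le> (1::real)}"
  define f2 where "f2 = (\<lambda>y t. indicator T (y, t) * ((t - x) powr (\<alpha> - 1) * (y - t) powr (- \<alpha>) * K t y * f y))"
  have x0: "0 \<le> x" using a0 x by simp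
  have closedT: "closed T"
  proof -
    have "T = {p. x \<le> snd p} \<inter> {p. snd p \<le> fst p} \<inter> {p. fst p \<le> 1}"
      by (auto simp: T_def)
    moreover have "closed ({p::real\<times>real. x \<le> snd p} \<inter> {p. snd p \<le> fst p} \<inter> {p. fst p \<le> 1})"
      by (intro closed_Int closed_Collect_le continuous_intros)
    ultimately show ?thesis by simp
  qed
  have contT: "continuous_on T (\<lambda>p. K (snd p) (fst p))"
  proof -
    have c: "continuous_on Delta (\<lambda>(x,y). K x y)" using LK by (rule K_cont)
    have "continuous_on T ((\<lambda>(x,y). K x y) \<circ> (\<lambda>p. (snd p, fst p)))"
    proof (rule continuous_on_compose)
      show "continuous_on T (\<lambda>p. (snd p, fst p))" by (intro continuous_intros)
      have "(\<lambda>p. (snd p, fst p)) ` T \<subseteq> Delta" using x0 by (auto simp: T_def)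
      then show "continuous_on ((\<lambda>p. (snd p, fst p)) ` T) (\<lambda>(x, y). K x y)"
        by (rule continuous_on_subset[OF c])
    qed
    then show ?thesis by (simp add: o_def case_prod_beta)
  qed
  have mK: "(\<lambda>p. indicator T p *\<^sub>R K (snd p) (fst p)) \<in> borel_measurable borel"
    by (rule borel_measurable_continuous_on_indicator[OF _ contT]) (simp add: closedT)
  have mf: "(\<lambda>y. indicator {a0..1} y *\<^sub>R f y) \<in> borel_measurable borel"
    using fi unfolding set_integrable_def by (simp add: borel_measurable_integrable)
  have mf2: "(\<lambda>p::real\<times>real. indicator {a0..1} (fst p) *\<^sub>R f (fst p)) \<in> borel_measurable borel"
  proof -
    have "(fst :: real \<times> real \<Rightarrow> real) \<in> borel_measurable borel"
      by (rule borel_measurable_continuous_onI) (intro continuous_intros)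
    from measurable_compose[OF this mf] show ?thesis by (simp add: o_def)
  qed
  have f2eq: "case_prod f2 = (\<lambda>p. (indicator T p *\<^sub>R K (snd p) (fst p)) *
      ((snd p - x) powr (\<alpha> - 1) * (fst p - snd p) powr (- \<alpha>)) * (indicator {a0..1} (fst p) *\<^sub>R f (fst p)))"
  proof (rule ext, clarify)
    fix y t :: real
    show "f2 y t = (indicator T (y, t) *\<^sub>R K (snd (y, t)) (fst (y, t))) *
      ((snd (y, t) - x) powr (\<alpha> - 1) * (fst (y, t) - snd (y, t)) powr (- \<alpha>)) *
      (indicator {a0..1} (fst (y, t)) *\<^sub>R f (fst (y, t)))"
      using x by (cases "(y, t) \<in> T") (auto simp: f2_def T_def indicator_def)
  qed
  have meas: "case_prod f2 \<in> borel_measurable (lborel \<Otimes>\<^sub>M lborel)"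
  proof -
    have mfst: "(fst :: real \<times> real \<Rightarrow> real) \<in> borel_measurable borel"
      by (rule borel_measurable_continuous_onI) (intro continuous_intros)
    have msnd: "(snd :: real \<times> real \<Rightarrow> real) \<in> borel_measurable borel"
      by (rule borel_measurable_continuous_onI) (intro continuous_intros)
    have mp: "(\<lambda>p::real\<times>real. (snd p - x) powr (\<alpha> - 1) * (fst p - snd p) powr (- \<alpha>)) \<in> borel_measurable borel"
      by (intro borel_measurable_times powr_real_measurable borel_measurable_diff mfst msnd borel_measurable_const)
    have "(\<lambda>p. (indicator T p *\<^sub>R K (snd p) (fst p)) *
      ((snd p - x) powr (\<alpha> - 1) * (fst p - snd p) powr (- \<alpha>)) * (indicator {a0..1} (fst p) *\<^sub>R f (fst p))) \<in> borel_measurable borel"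
      by (intro borel_measurable_times mK mp mf2)
    then show ?thesis unfolding lborel_prod f2eq measurable_lborel2 .
  qed
  define B where "B = Beta \<alpha> (1 - \<alpha>)"
  define M where "M = sup_abs K"
  have B0: "B > 0" unfolding B_def by (rule Beta_pos[OF a])
  have M0: "M \<ge> 0" unfolding M_def using K_le_sup[OF LK, of 0 0] by (simp add: order_trans[OF abs_ge_zero])
  have inner: "integrable lborel (\<lambda>t. f2 y t) \<and> (\<integral>t. f2 y t \<partial>lborel) = f y * kk \<alpha> K x y
      \<and> (\<integral>t. norm (f2 y t) \<partial>lborel) \<le> \<bar>f y\<bar> * (B * M)" if y: "x < y" "y \<le> 1" for y
  proof -
    define G where "G = (\<lambda>t. (t - x) powr (\<alpha> - 1) * (y - t) powr (- \<alpha>) * K t y)"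
    define Ga where "Ga = (\<lambda>t. (t - x) powr (\<alpha> - 1) * (y - t) powr (- \<alpha>) * \<bar>K t y\<bar>)"
    have xy: "0 \<le> x" "x \<le> y" "y \<le> 1" using x0 y by auto
    have Tiff: "(y, t) \<in> T \<longleftrightarrow> t \<in> {x..y}" for t using y by (auto simp: T_def)
    have f2e: "f2 y t = f y * (indicator {x..y} t * G t)" for t
      unfolding f2_def G_def by (cases "t \<in> {x..y}") (simp_all add: Tiff indicator_def mult_ac)
    have f2n: "norm (f2 y t) = \<bar>f y\<bar> * (indicator {x..y} t * Ga t)" for t
      unfolding f2e G_def Ga_def by (simp add: abs_mult indicator_def)
    have sG: "set_integrable lborel {x..y} G"
      unfolding G_def using sub_integrable[OF y(1), of \<alpha> "\<lambda>t. K t y"] kk_int(1)[OF a LK xy] by simp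
    have cA: "continuous_on {0..1} (\<lambda>s. \<bar>K (x + (y - x) * s) y\<bar>)"
      by (intro continuous_intros seg_cont[OF LK xy])
    have bA: "\<forall>s\<in>{0..1}. \<bar>\<bar>K (x + (y - x) * s) y\<bar>\<bar> \<le> M"
      unfolding M_def using K_le_sup[OF LK seg_in_Delta[OF xy]] by simp
    have sGa: "set_integrable lborel {x..y} Ga"
      unfolding Ga_def using sub_integrable[OF y(1), of \<alpha> "\<lambda>t. \<bar>K t y\<bar>"] seg_bound(1)[OF a cA bA] by simp
    have iG: "integrable lborel (\<lambda>t. indicator {x..y} t * G t)"
      using sG unfolding set_integrable_def by simp
    have i1: "integrable lborel (\<lambda>t. f2 y t)"
      unfolding f2e by (rule integrable_mult_right[OF iG])
    have e1: "(\<integral>t. f2 y t \<partial>lborel) = f y * (LINT t:{x..y}|lborel. G t)"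
      unfolding f2e set_lebesgue_integral_def by simp
    have e2: "(LINT t:{x..y}|lborel. G t) = kk \<alpha> K x y"
      unfolding G_def kk_def by (rule sub_integral[OF y(1)])
    have e3: "(\<integral>t. norm (f2 y t) \<partial>lborel) = \<bar>f y\<bar> * (LINT t:{x..y}|lborel. Ga t)"
      unfolding f2n set_lebesgue_integral_def by simp
    have e4: "(LINT t:{x..y}|lborel. Ga t) = (LINT s:{0..1}|lborel. wt \<alpha> s * \<bar>K (x + (y - x) * s) y\<bar>)"
      unfolding Ga_def by (rule sub_integral[OF y(1)])
    have e5: "\<bar>LINT s:{0..1}|lborel. wt \<alpha> s * \<bar>K (x + (y - x) * s) y\<bar>\<bar> \<le> B * M"
      unfolding B_def by (rule seg_bound(2)[OF a cA bA])
    have "(\<integral>t. norm (f2 y t) \<partial>lborel) \<le> \<bar>f y\<bar> * (B * M)"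
      unfolding e3 e4 by (rule mult_left_mono[OF order_trans[OF abs_ge_self e5] abs_ge_zero])
    then show ?thesis using i1 e1 e2 by simp
  qed
  have zero: "f2 y t = 0" if "y \<notin> {x..1}" for y t
    using that by (auto simp: f2_def T_def indicator_def)
  have AEint: "AE y in lborel. integrable lborel (\<lambda>t. f2 y t)"
    using AE_lborel_singleton[of x]
  proof (rule eventually_mono)
    fix y :: real assume "y \<noteq> x"
    show "integrable lborel (\<lambda>t. f2 y t)"
    proof (cases "y \<in> {x..1}")
      case True
      then show ?thesis using inner[of y] \<open>y \<noteq> x\<close> by auto
    next
      case False
      then show ?thesis using zero[OF False] by simp
    qed
  qed
  have meas_norm: "(\<lambda>y. \<integral>t. norm (f2 y t) \<partial>lborel) \<in> borel_measurable lborel"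
  proof (rule lborel.borel_measurable_lebesgue_integral)
    have "(\<lambda>p. norm (case_prod f2 p)) \<in> borel_measurable (lborel \<Otimes>\<^sub>M lborel)"
      using measurable_compose[OF meas borel_measurable_norm] by (simp add: o_def)
    then show "(\<lambda>(y, t). norm (f2 y t)) \<in> borel_measurable (lborel \<Otimes>\<^sub>M lborel)"
      by (simp add: case_prod_beta)
  qed
  have fint: "integrable lborel (\<lambda>y. indicator {a0..1} y *\<^sub>R f y)"
    using fi unfolding set_integrable_def .
  have gint: "integrable lborel (\<lambda>y. (B * M) * norm (indicator {a0..1} y *\<^sub>R f y))"
    by (intro integrable_mult_right integrable_norm fint)
  have integ1: "integrable lborel (\<lambda>y. \<integral>t. norm (f2 y t) \<partial>lborel)"
  proof (rule Bochner_Integration.integrable_bound[OF gint meas_norm])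
    show "AE y in lborel. norm (\<integral>t. norm (f2 y t) \<partial>lborel) \<le> norm ((B * M) * norm (indicator {a0..1} y *\<^sub>R f y))"
      using AE_lborel_singleton[of x]
    proof (rule eventually_mono)
      fix y :: real assume "y \<noteq> x"
      have nn: "(\<integral>t. norm (f2 y t) \<partial>lborel) \<ge> 0" by (rule Bochner_Integration.integral_nonneg) simp
      have BM: "B * M \<ge> 0" using B0 M0 by simp
      show "norm (\<integral>t. norm (f2 y t) \<partial>lborel) \<le> norm ((B * M) * norm (indicator {a0..1} y *\<^sub>R f y))"
      proof (cases "y \<in> {x..1}")
        case True
        then have y: "x < y" "y \<le> 1" using \<open>y \<noteq> x\<close> by auto
        have ind: "indicator {a0..1} y = (1::real)" using y x by (simp add: indicator_def)
        have "norm (\<integral>t. norm (f2 y t) \<partial>lborel) = (\<integral>t. norm (f2 y t) \<partial>lborel)" using nn by simp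
        also have "\<dots> \<le> \<bar>f y\<bar> * (B * M)" using inner[OF y] by simp
        also have "\<dots> = norm ((B * M) * norm (indicator {a0..1} y *\<^sub>R f y))"
          using B0 M0 ind by (simp add: abs_mult)
        finally show ?thesis .
      next
        case False
        then show ?thesis using zero[OF False] by simp
      qed
    qed
  qed
  have integF: "integrable (lborel \<Otimes>\<^sub>M lborel) (case_prod f2)"
    using lborel_pair.Fubini_integrable[of "case_prod f2"] meas integ1 AEint by simp
  have fubini: "(\<integral>t. (\<integral>y. f2 y t \<partial>lborel) \<partial>lborel) = (\<integral>y. (\<integral>t. f2 y t \<partial>lborel) \<partial>lborel)"
    by (rule lborel_pair.Fubini_integral[OF integF])
  have pw: "indicator {x..1} t *\<^sub>R ((t - x) powr (\<alpha> - 1) * frac_op \<alpha> K f t) = (\<integral>y. f2 y t \<partial>lborel)" for t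
  proof -
    define c where "c = indicator {x..1} t * (t - x) powr (\<alpha> - 1)"
    have "(\<integral>y. f2 y t \<partial>lborel) = (\<integral>y. c * (indicator {t..1} y *\<^sub>R ((y - t) powr (- \<alpha>) * K t y * f y)) \<partial>lborel)"
    proof (rule Bochner_Integration.integral_cong[OF refl])
      fix y :: real
      show "f2 y t = c * (indicator {t..1} y *\<^sub>R ((y - t) powr (- \<alpha>) * K t y * f y))"
        unfolding f2_def c_def
        by (cases "x \<le> t"; cases "t \<le> y"; cases "y \<le> 1") (simp_all add: T_def indicator_def mult_ac)
    qed
    also have "\<dots> = c * (\<integral>y. indicator {t..1} y *\<^sub>R ((y - t) powr (- \<alpha>) * K t y * f y) \<partial>lborel)"
      by (rule integral_mult_right_zero)
    finally show ?thesis
      unfolding frac_op_def set_lebesgue_integral_def by (simp add: c_def)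
  qed
  have LHS: "(LINT t:{x..1}|lborel. (t - x) powr (\<alpha> - 1) * frac_op \<alpha> K f t) = (\<integral>t. (\<integral>y. f2 y t \<partial>lborel) \<partial>lborel)"
    unfolding set_lebesgue_integral_def pw ..
  have measS: "(\<lambda>t. \<integral>y. f2 y t \<partial>lborel) \<in> borel_measurable lborel"
  proof (rule lborel.borel_measurable_lebesgue_integral)
    have sw: "(\<lambda>p::real\<times>real. (snd p, fst p)) \<in> borel_measurable borel"
      by (rule borel_measurable_continuous_onI) (intro continuous_intros)
    have "case_prod f2 \<in> borel_measurable borel" using meas unfolding lborel_prod measurable_lborel2 .
    from measurable_compose[OF sw this]
    show "(\<lambda>(t, y). f2 y t) \<in> borel_measurable (lborel \<Otimes>\<^sub>M lborel)"
      unfolding lborel_prod measurable_lborel2 by (simp add: o_def case_prod_beta)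
  qed
  show "(\<lambda>t. indicator {x..1} t *\<^sub>R ((t - x) powr (\<alpha> - 1) * frac_op \<alpha> K f t)) \<in> borel_measurable borel"
    unfolding pw using measS by simp
  have mI: "(\<lambda>y. \<integral>t. f2 y t \<partial>lborel) \<in> borel_measurable lborel"
    by (rule lborel.borel_measurable_lebesgue_integral) (use meas in \<open>simp add: case_prod_beta\<close>)
  have mR: "(\<lambda>y. indicator {x..1} y *\<^sub>R (f y * kk \<alpha> K x y)) \<in> borel_measurable lborel"
  proof -
    have mk: "(\<lambda>y. indicator {x..1} y *\<^sub>R kk \<alpha> K x y) \<in> borel_measurable borel"
      by (rule borel_measurable_continuous_on_indicator[OF _ kk_cont_y[OF a LK x0 x(2)]]) simp
    have "(\<lambda>y. (indicator {x..1} y *\<^sub>R kk \<alpha> K x y) * (indicator {a0..1} y *\<^sub>R f y)) \<in> borel_measurable borel"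
      by (intro borel_measurable_times mk mf)
    moreover have "(\<lambda>y. (indicator {x..1} y *\<^sub>R kk \<alpha> K x y) * (indicator {a0..1} y *\<^sub>R f y))
        = (\<lambda>y. indicator {x..1} y *\<^sub>R (f y * kk \<alpha> K x y))"
      using x by (auto simp: indicator_def fun_eq_iff)
    ultimately show ?thesis by simp
  qed
  have RHS: "(\<integral>y. (\<integral>t. f2 y t \<partial>lborel) \<partial>lborel) = (LINT y:{x..1}|lborel. f y * kk \<alpha> K x y)"
    unfolding set_lebesgue_integral_def
  proof (rule integral_cong_AE[OF mI mR])
    show "AE y in lborel. (\<integral>t. f2 y t \<partial>lborel) = indicator {x..1} y *\<^sub>R (f y * kk \<alpha> K x y)"
      using AE_lborel_singleton[of x]
    proof (rule eventually_mono)
      fix y :: real assume "y \<noteq> x"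
      show "(\<integral>t. f2 y t \<partial>lborel) = indicator {x..1} y *\<^sub>R (f y * kk \<alpha> K x y)"
      proof (cases "y \<in> {x..1}")
        case True
        then have y: "x < y" "y \<le> 1" using \<open>y \<noteq> x\<close> by auto
        then show ?thesis using inner[OF y] True by simp
      next
        case False
        then show ?thesis using zero[OF False] by simp
      qed
    qed
  qed
  show "(LINT t:{x..1}|lborel. (t - x) powr (\<alpha> - 1) * frac_op \<alpha> K f t)
       = (LINT y:{x..1}|lborel. f y * kk \<alpha> K x y)" using LHS fubini RHS by simp
qed

end

lemma GL:
  fixes h \<phi> :: "real \<Rightarrow> real"
  assumes hi: "set_integrable lborel A h" and A: "A \<in> sets borel"
    and m: "(\<lambda>y. indicator A y *\<^sub>R \<phi> y) \<in> borel_measurable borel"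
    and b: "AE y in lborel. y \<in> A \<longrightarrow> \<bar>\<phi> y\<bar> \<le> P" and P: "P \<ge> 0"
  shows "set_integrable lborel A (\<lambda>y. h y * \<phi> y)"
    and "\<bar>LINT y:A|lborel. h y * \<phi> y\<bar> \<le> P * (LINT y:A|lborel. \<bar>h y\<bar>)"
proof -
  have hint: "integrable lborel (\<lambda>y. indicator A y *\<^sub>R h y)" using hi unfolding set_integrable_def .
  have mh: "(\<lambda>y. indicator A y *\<^sub>R h y) \<in> borel_measurable borel"
    using borel_measurable_integrable[OF hint] by simp
  have meq: "(\<lambda>y. indicator A y *\<^sub>R (h y * \<phi> y)) = (\<lambda>y. (indicator A y *\<^sub>R h y) * (indicator A y *\<^sub>R \<phi> y))"
    by (rule ext) (simp add: indicator_def)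
  have mp: "(\<lambda>y. indicator A y *\<^sub>R (h y * \<phi> y)) \<in> borel_measurable lborel"
    unfolding meq measurable_lborel2 by (intro borel_measurable_times mh m)
  have gint: "integrable lborel (\<lambda>y. P * norm (indicator A y *\<^sub>R h y))"
    by (intro integrable_mult_right integrable_norm hint)
  have bnd: "AE y in lborel. norm (indicator A y *\<^sub>R (h y * \<phi> y)) \<le> P * norm (indicator A y *\<^sub>R h y)"
    using b
  proof (rule eventually_mono)
    fix y assume y: "y \<in> A \<longrightarrow> \<bar>\<phi> y\<bar> \<le> P"
    show "norm (indicator A y *\<^sub>R (h y * \<phi> y)) \<le> P * norm (indicator A y *\<^sub>R h y)"
    proof (cases "y \<in> A")
      case True
      then have "\<bar>\<phi> y\<bar> \<le> P" using y by simp
      then have "\<bar>h y\<bar> * \<bar>\<phi> y\<bar> \<le> \<bar>h y\<bar> * P" by (rule mult_left_mono) simp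
      then show ?thesis using True by (simp add: abs_mult mult.commute)
    qed simp
  qed
  have int: "integrable lborel (\<lambda>y. indicator A y *\<^sub>R (h y * \<phi> y))"
    by (rule Bochner_Integration.integrable_bound[OF gint mp])
       (use bnd P in \<open>auto elim!: eventually_mono\<close>)
  then show "set_integrable lborel A (\<lambda>y. h y * \<phi> y)" unfolding set_integrable_def .
  have "\<bar>LINT y:A|lborel. h y * \<phi> y\<bar> = norm (\<integral>y. indicator A y *\<^sub>R (h y * \<phi> y) \<partial>lborel)"
    unfolding set_lebesgue_integral_def by simp
  also have "\<dots> \<le> (\<integral>y. norm (indicator A y *\<^sub>R (h y * \<phi> y)) \<partial>lborel)"
    by (rule integral_norm_bound)
  also have "\<dots> \<le> (\<integral>y. P * norm (indicator A y *\<^sub>R h y) \<partial>lborel)"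
    by (rule integral_mono_AE[OF integrable_norm[OF int] gint bnd])
  also have "\<dots> = P * (LINT y:A|lborel. \<bar>h y\<bar>)"
    unfolding set_lebesgue_integral_def by (simp add: indicator_def abs_mult)
  finally show "\<bar>LINT y:A|lborel. h y * \<phi> y\<bar> \<le> P * (LINT y:A|lborel. \<bar>h y\<bar>)" .
qed

lemma abs_int_mono_set:
  fixes h :: "real \<Rightarrow> real"
  assumes hi: "set_integrable lborel J h" and A: "A \<in> sets borel" and sub: "A \<subseteq> J"
  shows "(LINT y:A|lborel. \<bar>h y\<bar>) \<le> (LINT y:J|lborel. \<bar>h y\<bar>)"
proof -
  have hint: "integrable lborel (\<lambda>y. indicator J y *\<^sub>R h y)" using hi unfolding set_integrable_def .
  have hA: "integrable lborel (\<lambda>y. indicator A y *\<^sub>R h y)"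
    using set_integrable_subset[OF hi _ sub] A unfolding set_integrable_def by simp
  show ?thesis unfolding set_lebesgue_integral_def
    by (rule integral_mono[OF _ _]) (use integrable_norm[OF hA] integrable_norm[OF hint] sub in \<open>auto simp: indicator_def abs_mult\<close>)
qed


context
  fixes \<alpha> :: real and K :: "real \<Rightarrow> real \<Rightarrow> real"
  assumes a: "0 < \<alpha>" "\<alpha> < 1" and LK: "Lip_Delta K"
begin

lemma mKd: "(\<lambda>y. indicator {0..1} y *\<^sub>R K y y) \<in> borel_measurable borel"
  by (rule borel_measurable_continuous_on_indicator[OF _ K_cont_diag[OF LK]]) simp

lemma mkk: "0 \<le> x \<Longrightarrow> x \<le> 1 \<Longrightarrow> (\<lambda>y. indicator {x..1} y *\<^sub>R kk \<alpha> K x y) \<in> borel_measurable borel"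
  by (rule borel_measurable_continuous_on_indicator[OF _ kk_cont_y[OF a LK]]) simp_all

lemma M_nonneg: "sup_abs K \<ge> 0"
  using K_le_sup[OF LK, of 0 0] by (simp add: order_trans[OF abs_ge_zero])

lemma hkk_int:
  assumes a0: "0 \<le> a0" and hi: "set_integrable lborel {a0..1} h" and x: "a0 \<le> x" "x \<le> 1"
  shows "set_integrable lborel {x..1} (\<lambda>y. h y * kk \<alpha> K x y)"
proof -
  have hx: "set_integrable lborel {x..1} h" by (rule set_integrable_subset[OF hi]) (use x in auto)
  show ?thesis
  proof (rule GL(1)[OF hx _ mkk _ ])
    show "AE y in lborel. y \<in> {x..1} \<longrightarrow> \<bar>kk \<alpha> K x y\<bar> \<le> Beta \<alpha> (1 - \<alpha>) * sup_abs K"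
      using kk_int(2)[OF a LK] a0 x by (intro AE_I2) auto
    show "0 \<le> Beta \<alpha> (1 - \<alpha>) * sup_abs K" using Beta_pos[OF a] M_nonneg by simp
  qed (use a0 x in auto)
qed

lemma zero_h:
  assumes a0: "0 \<le> a0" and fi: "set_integrable lborel {a0..1} f" and gi: "set_integrable lborel {a0..1} g"
    and eq: "AE t in lborel. t \<in> {a0..1} \<longrightarrow> frac_op \<alpha> K f t = frac_op \<alpha> K g t"
    and x: "a0 \<le> x" "x \<le> 1"
  shows "(LINT y:{x..1}|lborel. (f y - g y) * kk \<alpha> K x y) = 0"
proof -
  have E: "(LINT t:{x..1}|lborel. (t - x) powr (\<alpha> - 1) * frac_op \<alpha> K f t)
         = (LINT t:{x..1}|lborel. (t - x) powr (\<alpha> - 1) * frac_op \<alpha> K g t)"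
    unfolding set_lebesgue_integral_def
  proof (rule integral_cong_AE)
    show "(\<lambda>t. indicator {x..1} t *\<^sub>R ((t - x) powr (\<alpha> - 1) * frac_op \<alpha> K f t)) \<in> borel_measurable lborel"
      using fub(2)[OF a LK a0 fi x] by simp
    show "(\<lambda>t. indicator {x..1} t *\<^sub>R ((t - x) powr (\<alpha> - 1) * frac_op \<alpha> K g t)) \<in> borel_measurable lborel"
      using fub(2)[OF a LK a0 gi x] by simp
    show "AE t in lborel. indicator {x..1} t *\<^sub>R ((t - x) powr (\<alpha> - 1) * frac_op \<alpha> K f t) =
        indicator {x..1} t *\<^sub>R ((t - x) powr (\<alpha> - 1) * frac_op \<alpha> K g t)"
      using eq by (rule eventually_mono) (use x in \<open>auto simp: indicator_def\<close>)
  qed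
  have E2: "(LINT y:{x..1}|lborel. f y * kk \<alpha> K x y) = (LINT y:{x..1}|lborel. g y * kk \<alpha> K x y)"
    using E fub(1)[OF a LK a0 fi x] fub(1)[OF a LK a0 gi x] by simp
  have "(LINT y:{x..1}|lborel. (f y - g y) * kk \<alpha> K x y)
      = (LINT y:{x..1}|lborel. f y * kk \<alpha> K x y - g y * kk \<alpha> K x y)"
    by (simp add: left_diff_distrib)
  also have "\<dots> = (LINT y:{x..1}|lborel. f y * kk \<alpha> K x y) - (LINT y:{x..1}|lborel. g y * kk \<alpha> K x y)"
    by (rule set_integral_diff(2)[OF hkk_int[OF a0 fi x] hkk_int[OF a0 gi x]])
  finally show ?thesis using E2 by simp
qed

end

context
  fixes \<alpha> :: real and K :: "real \<Rightarrow> real \<Rightarrow> real"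
  assumes a: "0 < \<alpha>" "\<alpha> < 1" and LK: "Lip_Delta K"
begin

lemma interval_bound:
  assumes a0: "0 \<le> a0" and hi: "set_integrable lborel {a0..1} h"
    and Z: "\<And>x. a0 \<le> x \<Longrightarrow> x \<le> 1 \<Longrightarrow> (LINT y:{x..1}|lborel. h y * kk \<alpha> K x y) = 0"
    and uv: "a0 \<le> u" "u < v" "v \<le> 1"
  shows "\<bar>LINT y:{u..<v}|lborel. h y * K y y\<bar> \<le> 2 * lip1 K * (v - u) * (LINT y:{a0..1}|lborel. \<bar>h y\<bar>)"
proof -
  define B where "B = Beta \<alpha> (1 - \<alpha>)"
  define L where "L = lip1 K"
  define N where "N = (LINT y:{a0..1}|lborel. \<bar>h y\<bar>)"
  have B0: "B > 0" unfolding B_def by (rule Beta_pos[OF a])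
  have L0: "L \<ge> 0" unfolding L_def by (rule lip1_nonneg[OF LK])
  have u0: "0 \<le> u" "u \<le> 1" "0 \<le> v" using uv a0 by auto
  have iu: "set_integrable lborel {u..1} (\<lambda>y. h y * kk \<alpha> K u y)"
    by (rule hkk_int[OF a LK a0 hi]) (use uv in auto)
  have iv: "set_integrable lborel {v..1} (\<lambda>y. h y * kk \<alpha> K v y)"
    by (rule hkk_int[OF a LK a0 hi]) (use uv in auto)
  have iuv: "set_integrable lborel {u..<v} (\<lambda>y. h y * kk \<alpha> K u y)"
    by (rule set_integrable_subset[OF iu]) (use uv in auto)
  have iu_v: "set_integrable lborel {v..1} (\<lambda>y. h y * kk \<alpha> K u y)"
    by (rule set_integrable_subset[OF iu]) (use uv in auto)
  have hA: "set_integrable lborel A h" if "A \<in> sets borel" "A \<subseteq> {a0..1}" for A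
    by (rule set_integrable_subset[OF hi]) (use that in auto)
  have hv: "set_integrable lborel {v..1} h" by (rule hA) (use uv in auto)
  have huv: "set_integrable lborel {u..<v} h" by (rule hA) (use uv in auto)
  have un: "{u..<v} \<union> {v..1} = {u..1::real}" using uv by auto
  have split: "(LINT y:{u..1}|lborel. h y * kk \<alpha> K u y) =
      (LINT y:{u..<v}|lborel. h y * kk \<alpha> K u y) + (LINT y:{v..1}|lborel. h y * kk \<alpha> K u y)"
  proof -
    have dis: "{u..<v} \<inter> {v..1} = ({}::real set)" by auto
    show ?thesis using set_integral_Un[OF dis iuv iu_v] unfolding un .
  qed
  have Zu: "(LINT y:{u..1}|lborel. h y * kk \<alpha> K u y) = 0" by (rule Z) (use uv in auto)
  have Zv: "(LINT y:{v..1}|lborel. h y * kk \<alpha> K v y) = 0" by (rule Z) (use uv in auto)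
  have d1: "(LINT y:{v..1}|lborel. h y * (kk \<alpha> K u y - kk \<alpha> K v y)) =
     (LINT y:{v..1}|lborel. h y * kk \<alpha> K u y) - (LINT y:{v..1}|lborel. h y * kk \<alpha> K v y)"
    using set_integral_diff(2)[OF iu_v iv] by (simp add: right_diff_distrib)
  have I1: "(LINT y:{u..<v}|lborel. h y * kk \<alpha> K u y) = - (LINT y:{v..1}|lborel. h y * (kk \<alpha> K u y - kk \<alpha> K v y))"
    using split Zu Zv d1 by simp
  have m1: "(\<lambda>y. indicator {v..1} y *\<^sub>R (kk \<alpha> K u y - kk \<alpha> K v y)) \<in> borel_measurable borel"
  proof -
    have "(\<lambda>y. indicator {v..1} y * (indicator {u..1} y *\<^sub>R kk \<alpha> K u y) - indicator {v..1} y *\<^sub>R kk \<alpha> K v y) \<in> borel_measurable borel"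
      by (intro borel_measurable_diff borel_measurable_times borel_measurable_indicator mkk[OF a LK] u0) (use uv in simp_all)
    moreover have "(\<lambda>y. indicator {v..1} y * (indicator {u..1} y *\<^sub>R kk \<alpha> K u y) - indicator {v..1} y *\<^sub>R kk \<alpha> K v y)
       = (\<lambda>y. indicator {v..1} y *\<^sub>R (kk \<alpha> K u y - kk \<alpha> K v y))"
      using uv by (auto simp: indicator_def fun_eq_iff)
    ultimately show ?thesis by simp
  qed
  have b1: "\<bar>LINT y:{v..1}|lborel. h y * (kk \<alpha> K u y - kk \<alpha> K v y)\<bar> \<le> (B * (L * (v - u))) * (LINT y:{v..1}|lborel. \<bar>h y\<bar>)"
  proof (rule GL(2)[OF hv _ m1])
    show "AE y in lborel. y \<in> {v..1} \<longrightarrow> \<bar>kk \<alpha> K u y - kk \<alpha> K v y\<bar> \<le> B * (L * (v - u))"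
    proof (intro AE_I2 impI)
      fix y :: real assume y: "y \<in> {v..1}"
      have "\<bar>kk \<alpha> K u y - kk \<alpha> K v y\<bar> \<le> Beta \<alpha> (1 - \<alpha>) * (lip1 K * \<bar>u - v\<bar>)"
        by (rule kk_lip1[OF a LK]) (use y uv u0 in auto)
      then show "\<bar>kk \<alpha> K u y - kk \<alpha> K v y\<bar> \<le> B * (L * (v - u))" using uv by (simp add: B_def L_def)
    qed
    show "0 \<le> B * (L * (v - u))" using B0 L0 uv by simp
  qed (use uv in auto)
  have mD: "(\<lambda>y. indicator {u..<v} y *\<^sub>R K y y) \<in> borel_measurable borel"
  proof -
    have "(\<lambda>y. indicator {u..<v} y * (indicator {0..1} y *\<^sub>R K y y)) \<in> borel_measurable borel"
      by (intro borel_measurable_times borel_measurable_indicator mKd[OF a LK]) simp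
    moreover have "(\<lambda>y. indicator {u..<v} y * (indicator {0..1} y *\<^sub>R K y y)) = (\<lambda>y. indicator {u..<v} y *\<^sub>R K y y)"
      using uv u0 by (auto simp: indicator_def fun_eq_iff)
    ultimately show ?thesis by simp
  qed
  have m2: "(\<lambda>y. indicator {u..<v} y *\<^sub>R (kk \<alpha> K u y - B * K y y)) \<in> borel_measurable borel"
  proof -
    have "(\<lambda>y. indicator {u..<v} y * (indicator {u..1} y *\<^sub>R kk \<alpha> K u y) - B * (indicator {u..<v} y *\<^sub>R K y y)) \<in> borel_measurable borel"
      by (intro borel_measurable_diff borel_measurable_times borel_measurable_indicator mkk[OF a LK] u0 mD borel_measurable_const) simp
    moreover have "(\<lambda>y. indicator {u..<v} y * (indicator {u..1} y *\<^sub>R kk \<alpha> K u y) - B * (indicator {u..<v} y *\<^sub>R K y y))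
       = (\<lambda>y. indicator {u..<v} y *\<^sub>R (kk \<alpha> K u y - B * K y y))"
      using uv by (auto simp: indicator_def fun_eq_iff)
    ultimately show ?thesis by simp
  qed
  have b2: "\<bar>LINT y:{u..<v}|lborel. h y * (kk \<alpha> K u y - B * K y y)\<bar> \<le> (B * (L * (v - u))) * (LINT y:{u..<v}|lborel. \<bar>h y\<bar>)"
  proof (rule GL(2)[OF huv _ m2])
    show "AE y in lborel. y \<in> {u..<v} \<longrightarrow> \<bar>kk \<alpha> K u y - B * K y y\<bar> \<le> B * (L * (v - u))"
    proof (intro AE_I2 impI)
      fix y :: real assume y: "y \<in> {u..<v}"
      have "\<bar>kk \<alpha> K u y - Beta \<alpha> (1 - \<alpha>) * K y y\<bar> \<le> Beta \<alpha> (1 - \<alpha>) * (lip1 K * (y - u))"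
        by (rule kk_diag[OF a LK]) (use y uv u0 in auto)
      also have "\<dots> \<le> Beta \<alpha> (1 - \<alpha>) * (lip1 K * (v - u))"
        using y B0 L0 by (intro mult_left_mono) (auto simp: B_def L_def)
      finally show "\<bar>kk \<alpha> K u y - B * K y y\<bar> \<le> B * (L * (v - u))" by (simp add: B_def L_def)
    qed
    show "0 \<le> B * (L * (v - u))" using B0 L0 uv by simp
  qed (use uv in auto)
  have iD: "set_integrable lborel {u..<v} (\<lambda>y. h y * (kk \<alpha> K u y - B * K y y))"
  proof (rule GL(1)[OF huv _ m2])
    show "AE y in lborel. y \<in> {u..<v} \<longrightarrow> \<bar>kk \<alpha> K u y - B * K y y\<bar> \<le> B * sup_abs K + B * sup_abs K"
    proof (intro AE_I2 impI)
      fix y :: real assume y: "y \<in> {u..<v}"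
      have "\<bar>kk \<alpha> K u y\<bar> \<le> B * sup_abs K" unfolding B_def by (rule kk_int(2)[OF a LK]) (use y uv u0 in auto)
      moreover have "\<bar>K y y\<bar> \<le> sup_abs K" by (rule K_le_sup[OF LK]) (use y uv u0 in auto)
      then have "\<bar>B * K y y\<bar> \<le> B * sup_abs K" using B0 by (simp add: abs_mult)
      ultimately show "\<bar>kk \<alpha> K u y - B * K y y\<bar> \<le> B * sup_abs K + B * sup_abs K" by simp
    qed
    show "0 \<le> B * sup_abs K + B * sup_abs K" using B0 M_nonneg[OF a LK] by simp
  qed (use uv in auto)
  have I2: "B * (LINT y:{u..<v}|lborel. h y * K y y) =
     (LINT y:{u..<v}|lborel. h y * kk \<alpha> K u y) - (LINT y:{u..<v}|lborel. h y * (kk \<alpha> K u y - B * K y y))"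
  proof -
    have "(LINT y:{u..<v}|lborel. h y * kk \<alpha> K u y) - (LINT y:{u..<v}|lborel. h y * (kk \<alpha> K u y - B * K y y))
       = (LINT y:{u..<v}|lborel. h y * kk \<alpha> K u y - h y * (kk \<alpha> K u y - B * K y y))"
      by (rule set_integral_diff(2)[OF iuv iD, symmetric])
    also have "\<dots> = (LINT y:{u..<v}|lborel. B * (h y * K y y))"
      by (simp add: algebra_simps)
    also have "\<dots> = B * (LINT y:{u..<v}|lborel. h y * K y y)" by simp
    finally show ?thesis by simp
  qed
  have N1: "(LINT y:{v..1}|lborel. \<bar>h y\<bar>) \<le> N" unfolding N_def
    by (rule abs_int_mono_set[OF hi]) (use uv in auto)
  have N2: "(LINT y:{u..<v}|lborel. \<bar>h y\<bar>) \<le> N" unfolding N_def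
    by (rule abs_int_mono_set[OF hi]) (use uv in auto)
  have c0: "B * (L * (v - u)) \<ge> 0" using B0 L0 uv by simp
  have "B * \<bar>LINT y:{u..<v}|lborel. h y * K y y\<bar> = \<bar>B * (LINT y:{u..<v}|lborel. h y * K y y)\<bar>"
    using B0 by (simp add: abs_mult)
  also have "\<dots> \<le> \<bar>LINT y:{v..1}|lborel. h y * (kk \<alpha> K u y - kk \<alpha> K v y)\<bar> + \<bar>LINT y:{u..<v}|lborel. h y * (kk \<alpha> K u y - B * K y y)\<bar>"
    unfolding I2 I1 by simp
  also have "\<dots> \<le> (B * (L * (v - u))) * N + (B * (L * (v - u))) * N"
    using b1 b2 mult_left_mono[OF N1 c0] mult_left_mono[OF N2 c0] by linarith
  also have "\<dots> = B * (2 * L * (v - u) * N)" by (simp add: algebra_simps)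
  finally show ?thesis using B0 by (simp add: L_def N_def)
qed

end

lemma step_sum:
  fixes a0 d :: real and n :: nat and \<psi> :: "real \<Rightarrow> real"
  assumes d: "d > 0" and y: "a0 \<le> y" "y < a0 + real n * d"
  defines "k \<equiv> nat \<lfloor>(y - a0) / d\<rfloor>"
  shows "k < n" "a0 + real k * d \<le> y" "y < a0 + real (Suc k) * d"
    and "(\<Sum>i<n. \<psi> (a0 + real i * d) * indicator {a0 + real i * d..<a0 + real (Suc i) * d} y) = \<psi> (a0 + real k * d)"
proof -
  define t where "t = (y - a0) / d"
  have t0: "t \<ge> 0" using y d by (simp add: t_def)
  have tn: "t < real n" using y d by (simp add: t_def pos_divide_less_eq mult.commute)
  have kf: "real k = of_int \<lfloor>t\<rfloor>" using t0 by (simp add: k_def t_def)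
  have kt: "real k \<le> t" "t < real k + 1" using kf by linarith+
  have iff: "a0 + real i * d \<le> y \<and> y < a0 + real (Suc i) * d \<longleftrightarrow> i = k" for i
  proof -
    have "a0 + real i * d \<le> y \<longleftrightarrow> real i \<le> t" using d by (simp add: t_def pos_le_divide_eq) arith
    moreover have "y < a0 + real (Suc i) * d \<longleftrightarrow> t < real i + 1"
      using d by (simp add: t_def pos_divide_less_eq algebra_simps)
    moreover have "real i \<le> t \<and> t < real i + 1 \<longleftrightarrow> i = k"
    proof
      assume "real i \<le> t \<and> t < real i + 1"
      then have "\<lfloor>t\<rfloor> = int i" by (simp add: floor_eq_iff)
      then show "i = k" by (simp add: k_def t_def)
    next
      assume "i = k" then show "real i \<le> t \<and> t < real i + 1" using kt by simp
    qed
    ultimately show ?thesis by blast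
  qed
  show "k < n" using kt tn by linarith
  show "a0 + real k * d \<le> y" "y < a0 + real (Suc k) * d" using iff[of k] by auto
  have "(\<Sum>i<n. \<psi> (a0 + real i * d) * indicator {a0 + real i * d..<a0 + real (Suc i) * d} y)
      = (\<Sum>i<n. if i = k then \<psi> (a0 + real k * d) else 0)"
    by (rule sum.cong[OF refl]) (use iff in \<open>auto simp: indicator_def\<close>)
  also have "\<dots> = \<psi> (a0 + real k * d)" using \<open>k < n\<close> by simp
  finally show "(\<Sum>i<n. \<psi> (a0 + real i * d) * indicator {a0 + real i * d..<a0 + real (Suc i) * d} y) = \<psi> (a0 + real k * d)" .
qed

lemma riemann:
  fixes G \<psi> :: "real \<Rightarrow> real"
  assumes a0: "a0 < 1" and Gi: "set_integrable lborel {a0..1} G"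
    and IB: "\<And>u v. a0 \<le> u \<Longrightarrow> u < v \<Longrightarrow> v \<le> 1 \<Longrightarrow> \<bar>LINT y:{u..<v}|lborel. G y\<bar> \<le> C * (v - u)"
    and c\<psi>: "continuous_on {a0..1} \<psi>" and b\<psi>: "\<forall>y\<in>{a0..1}. \<bar>\<psi> y\<bar> \<le> P"
  shows "\<bar>LINT y:{a0..1}|lborel. G y * \<psi> y\<bar> \<le> C * (1 - a0) * P"
proof -
  define J where "J = {a0..1::real}"
  define NG where "NG = (LINT y:J|lborel. \<bar>G y\<bar>)"
  have NG0: "NG \<ge> 0" unfolding NG_def set_lebesgue_integral_def
    by (rule Bochner_Integration.integral_nonneg) simp
  have "\<bar>\<psi> 1\<bar> \<le> P" using b\<psi> a0 by simp
  then have P0: "P \<ge> 0" by (rule order_trans[OF abs_ge_zero])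
  have C0: "C \<ge> 0"
  proof -
    have "\<bar>LINT y:{a0..<1}|lborel. G y\<bar> \<le> C * (1 - a0)" using IB[of a0 1] a0 by simp
    then have "0 \<le> C * (1 - a0)" by (rule order_trans[OF abs_ge_zero])
    then show ?thesis using a0 by (simp add: zero_le_mult_iff)
  qed
  have mJ: "(\<lambda>y. indicator J y *\<^sub>R \<psi> y) \<in> borel_measurable borel"
    unfolding J_def by (rule borel_measurable_continuous_on_indicator[OF _ c\<psi>]) simp
  have GJ: "set_integrable lborel J G" using Gi by (simp add: J_def)
  have Gpsi: "set_integrable lborel J (\<lambda>y. G y * \<psi> y)"
    by (rule GL(1)[OF GJ _ mJ _ P0]) (use b\<psi> in \<open>auto simp: J_def\<close>)
  have main: "\<bar>LINT y:J|lborel. G y * \<psi> y\<bar> \<le> C * (1 - a0) * P + \<epsilon> * NG" if \<epsilon>: "\<epsilon> > 0" for \<epsilon>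
  proof -
    have "uniformly_continuous_on {a0..1} \<psi>"
      by (rule compact_uniformly_continuous[OF c\<psi> compact_Icc])
    then obtain \<delta> where \<delta>: "\<delta> > 0" and uc: "\<And>x x'. x \<in> {a0..1} \<Longrightarrow> x' \<in> {a0..1} \<Longrightarrow> dist x' x < \<delta> \<Longrightarrow> dist (\<psi> x') (\<psi> x) < \<epsilon>"
      unfolding uniformly_continuous_on_def using \<epsilon> by metis
    obtain n :: nat where n: "(1 - a0) / \<delta> < real n" using reals_Archimedean2 by blast
    have npos: "n > 0" using n a0 \<delta> by (cases n) (auto simp: divide_pos_pos less_le_not_le)
    define d where "d = (1 - a0) / real n"
    have d0: "d > 0" using a0 npos by (simp add: d_def)
    have dd: "d < \<delta>" using n \<delta> npos a0 by (simp add: d_def divide_less_eq mult.commute pos_divide_less_eq)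
    define p where "p = (\<lambda>i::nat. a0 + real i * d)"
    have pn: "p n = 1" using npos by (simp add: p_def d_def)
    have pmono: "p i \<le> p j" if "i \<le> j" for i j using that d0 by (simp add: p_def mult_right_mono)
    have pJ: "p i \<in> J" if "i \<le> n" for i
      using pmono[of 0 i] pmono[OF that] pn that by (simp add: J_def p_def)
    define \<sigma> where "\<sigma> = (\<lambda>y. \<Sum>i<n. \<psi> (p i) * indicator {p i..<p (Suc i)} y)"
    have approx: "\<bar>\<psi> y - \<sigma> y\<bar> \<le> \<epsilon>" if y: "y \<in> J" "y \<noteq> 1" for y
    proof -
      have y': "a0 \<le> y" "y < a0 + real n * d" using y pn by (auto simp: J_def p_def)
      note ss = step_sum(1-3)[OF d0 y'] step_sum(4)[OF d0 y', where \<psi>=\<psi>]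
      define k where "k = nat \<lfloor>(y - a0) / d\<rfloor>"
      have s: "\<sigma> y = \<psi> (p k)" using ss(4) by (simp add: \<sigma>_def p_def k_def)
      have kn: "k < n" using ss(1) by (simp add: k_def)
      have "dist y (p k) < \<delta>"
      proof -
        have "p k \<le> y" "y < p k + d" using ss(2,3) by (auto simp: p_def k_def algebra_simps)
        then show ?thesis using dd by (simp add: dist_real_def)
      qed
      then have "dist (\<psi> y) (\<psi> (p k)) < \<epsilon>"
        using uc[of "p k" y] pJ[of k] kn y(1) by (simp add: J_def)
      then show ?thesis by (simp add: s dist_real_def)
    qed
    have m\<sigma>: "\<sigma> \<in> borel_measurable borel"
      unfolding \<sigma>_def by (intro borel_measurable_sum borel_measurable_times borel_measurable_const borel_measurable_indicator) simp
    have mdiff: "(\<lambda>y. indicator J y *\<^sub>R (\<psi> y - \<sigma> y)) \<in> borel_measurable borel"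
    proof -
      have "(\<lambda>y. indicator J y *\<^sub>R \<psi> y - indicator J y * \<sigma> y) \<in> borel_measurable borel"
        by (intro borel_measurable_diff borel_measurable_times mJ m\<sigma> borel_measurable_indicator) (simp add: J_def)
      moreover have "(\<lambda>y. indicator J y *\<^sub>R \<psi> y - indicator J y * \<sigma> y) = (\<lambda>y. indicator J y *\<^sub>R (\<psi> y - \<sigma> y))"
        by (auto simp: indicator_def fun_eq_iff)
      ultimately show ?thesis by simp
    qed
    have AEapprox: "AE y in lborel. y \<in> J \<longrightarrow> \<bar>\<psi> y - \<sigma> y\<bar> \<le> \<epsilon>"
      using AE_lborel_singleton[of 1] by (rule eventually_mono) (use approx in auto)
    have Gd: "set_integrable lborel J (\<lambda>y. G y * (\<psi> y - \<sigma> y))"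
      and Gdb: "\<bar>LINT y:J|lborel. G y * (\<psi> y - \<sigma> y)\<bar> \<le> \<epsilon> * NG"
      using GL[OF GJ _ mdiff AEapprox] \<epsilon> by (auto simp: J_def NG_def)
    have Gi_sub: "set_integrable lborel {p i..<p (Suc i)} G" if "i < n" for i
      by (rule set_integrable_subset[OF GJ]) (use pJ[of i] pJ[of "Suc i"] that in \<open>auto simp: J_def\<close>)
    have trm: "(\<lambda>y. indicator J y *\<^sub>R (G y * (\<psi> (p i) * indicator {p i..<p (Suc i)} y)))
        = (\<lambda>y. \<psi> (p i) * (indicator {p i..<p (Suc i)} y *\<^sub>R G y))" if "i < n" for i
    proof -
      have "{p i..<p (Suc i)} \<subseteq> J" using pJ[of i] pJ[of "Suc i"] that by (auto simp: J_def)
      then show ?thesis by (auto simp: indicator_def fun_eq_iff)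
    qed
    have Gsig: "(LINT y:J|lborel. G y * \<sigma> y) = (\<Sum>i<n. \<psi> (p i) * (LINT y:{p i..<p (Suc i)}|lborel. G y))"
    proof -
      have "(LINT y:J|lborel. G y * \<sigma> y) = (\<integral>y. (\<Sum>i<n. indicator J y *\<^sub>R (G y * (\<psi> (p i) * indicator {p i..<p (Suc i)} y))) \<partial>lborel)"
        unfolding set_lebesgue_integral_def
        by (rule Bochner_Integration.integral_cong[OF refl]) (simp only: \<sigma>_def sum_distrib_left scaleR_sum_right)
      also have "\<dots> = (\<Sum>i<n. (\<integral>y. indicator J y *\<^sub>R (G y * (\<psi> (p i) * indicator {p i..<p (Suc i)} y)) \<partial>lborel))"
      proof (rule Bochner_Integration.integral_sum)
        fix i assume "i \<in> {..<n}"
        then have i': "i < n" by simp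
        have "integrable lborel (\<lambda>y. \<psi> (p i) * (indicator {p i..<p (Suc i)} y *\<^sub>R G y))"
          using Gi_sub[OF i'] unfolding set_integrable_def by (rule integrable_mult_right)
        then show "integrable lborel (\<lambda>y. indicator J y *\<^sub>R (G y * (\<psi> (p i) * indicator {p i..<p (Suc i)} y)))"
          unfolding trm[OF i'] .
      qed
      also have "\<dots> = (\<Sum>i<n. \<psi> (p i) * (LINT y:{p i..<p (Suc i)}|lborel. G y))"
      proof (rule sum.cong[OF refl])
        fix i assume "i \<in> {..<n}"
        then have i': "i < n" by simp
        show "(\<integral>y. indicator J y *\<^sub>R (G y * (\<psi> (p i) * indicator {p i..<p (Suc i)} y)) \<partial>lborel)
           = \<psi> (p i) * (LINT y:{p i..<p (Suc i)}|lborel. G y)"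
          unfolding trm[OF i'] set_lebesgue_integral_def by (rule integral_mult_right_zero)
      qed
      finally show ?thesis .
    qed
    have Gsigb: "\<bar>LINT y:J|lborel. G y * \<sigma> y\<bar> \<le> C * (1 - a0) * P"
    proof -
      have "\<bar>\<Sum>i<n. \<psi> (p i) * (LINT y:{p i..<p (Suc i)}|lborel. G y)\<bar> \<le> (\<Sum>i<n. \<bar>\<psi> (p i) * (LINT y:{p i..<p (Suc i)}|lborel. G y)\<bar>)"
        by (rule sum_abs)
      also have "\<dots> \<le> (\<Sum>i<n. P * (C * d))"
      proof (rule sum_mono)
        fix i assume i: "i \<in> {..<n}"
        have "\<bar>\<psi> (p i)\<bar> \<le> P" using b\<psi> pJ[of i] i by (auto simp: J_def)
        moreover have "\<bar>LINT y:{p i..<p (Suc i)}|lborel. G y\<bar> \<le> C * (p (Suc i) - p i)"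
          by (rule IB) (use pJ[of i] pJ[of "Suc i"] i d0 in \<open>auto simp: J_def p_def\<close>)
        moreover have "p (Suc i) - p i = d" by (simp add: p_def algebra_simps)
        ultimately show "\<bar>\<psi> (p i) * (LINT y:{p i..<p (Suc i)}|lborel. G y)\<bar> \<le> P * (C * d)"
          by (simp add: abs_mult mult_mono)
      qed
      also have "\<dots> = C * (1 - a0) * P" using npos by (simp add: d_def)
      finally show ?thesis unfolding Gsig .
    qed
    have Gsi: "set_integrable lborel J (\<lambda>y. G y * \<sigma> y)"
    proof -
      have "set_integrable lborel J (\<lambda>y. G y * \<psi> y - G y * (\<psi> y - \<sigma> y))"
        by (rule set_integral_diff(1)[OF Gpsi Gd])
      then show ?thesis by (simp add: algebra_simps)
    qed
    have "(LINT y:J|lborel. G y * \<psi> y) = (LINT y:J|lborel. G y * \<sigma> y) + (LINT y:J|lborel. G y * (\<psi> y - \<sigma> y))"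
    proof -
      have "(LINT y:J|lborel. G y * \<sigma> y + G y * (\<psi> y - \<sigma> y)) = (LINT y:J|lborel. G y * \<sigma> y) + (LINT y:J|lborel. G y * (\<psi> y - \<sigma> y))"
        by (rule set_integral_add(2)[OF Gsi Gd])
      then show ?thesis by (simp add: algebra_simps)
    qed
    then show ?thesis using Gsigb Gdb by linarith
  qed
  show ?thesis
  proof (rule field_le_epsilon)
    fix e :: real assume e: "0 < e"
    have "\<bar>LINT y:J|lborel. G y * \<psi> y\<bar> \<le> C * (1 - a0) * P + (e / (NG + 1)) * NG"
      by (rule main) (use e NG0 in simp)
    also have "(e / (NG + 1)) * NG \<le> e" using e NG0 by (simp add: divide_le_eq field_simps)
    finally show "\<bar>LINT y:{a0..1}|lborel. G y * \<psi> y\<bar> \<le> C * (1 - a0) * P + e" by (simp add: J_def)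
  qed
qed


lemma approx_bound:
  fixes h :: "real \<Rightarrow> real"
  assumes hi: "set_integrable lborel J h"
    and T: "\<And>\<phi>. continuous_on UNIV \<phi> \<Longrightarrow> (\<forall>y. \<bar>\<phi> y\<bar> \<le> 1) \<Longrightarrow> \<bar>LINT y:J|lborel. h y * \<phi> y\<bar> \<le> Q"
  shows "(LINT y:J|lborel. \<bar>h y\<bar>) \<le> Q"
proof -
  have hint: "integrable lborel (\<lambda>y. indicator J y *\<^sub>R h y)" using hi unfolding set_integrable_def .
  have mh: "(\<lambda>y. indicator J y *\<^sub>R h y) \<in> borel_measurable borel"
    using borel_measurable_integrable[OF hint] by simp
  define u where "u = (\<lambda>y. sgn (indicator J y *\<^sub>R h y))"
  have mu: "u \<in> borel_measurable borel"
    unfolding u_def using measurable_compose[OF mh borel_measurable_sgn] by (simp add: o_def)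
  have "u \<in> borel_measurable lebesgue"
    by (rule measurable_completion) (use mu in simp)
  then have "u measurable_on UNIV" by (rule lebesgue_measurable_imp_measurable_on_real) simp
  then obtain N g where N: "negligible N" and gc: "\<And>n. continuous_on UNIV (g n)"
      and gl: "\<And>x. x \<notin> N \<Longrightarrow> (\<lambda>n. g n x) \<longlonglongrightarrow> (if x \<in> UNIV then u x else 0)"
    unfolding measurable_on_def by blast
  define \<phi> where "\<phi> = (\<lambda>n y. max (-1) (min 1 (g n y)))"
  have \<phi>c: "continuous_on UNIV (\<phi> n)" for n
    unfolding \<phi>_def by (intro continuous_intros gc)
  have \<phi>b: "\<bar>\<phi> n y\<bar> \<le> 1" for n y unfolding \<phi>_def by simp
  have ub: "\<bar>u y\<bar> \<le> 1" for y unfolding u_def by (simp add: abs_sgn_eq)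
  have \<phi>l: "(\<lambda>n. \<phi> n x) \<longlonglongrightarrow> u x" if "x \<notin> N" for x
  proof -
    have "(\<lambda>n. \<phi> n x) \<longlonglongrightarrow> max (-1) (min 1 (u x))"
      unfolding \<phi>_def using gl[OF that] by (intro tendsto_max tendsto_min tendsto_const) simp_all
    moreover have "max (-1) (min 1 (u x)) = u x" using ub[of x] by (simp add: abs_le_iff)
    ultimately show ?thesis by simp
  qed
  have AEN: "AE x in lborel. x \<notin> N"
  proof -
    have "N \<in> null_sets lebesgue" using N by (simp add: negligible_iff_null_sets)
    then have "AE x in lebesgue. x \<notin> N" by (rule AE_not_in)
    then show ?thesis by (simp add: AE_completion_iff)
  qed
  define s where "s = (\<lambda>n y. indicator J y *\<^sub>R h y * \<phi> n y)"
  have ms: "s n \<in> borel_measurable lborel" for n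
  proof -
    have "(\<phi> n) \<in> borel_measurable borel" by (rule borel_measurable_continuous_onI[OF \<phi>c])
    then show ?thesis unfolding s_def measurable_lborel2 by (intro borel_measurable_times mh)
  qed
  define F where "F = (\<lambda>y. indicator J y *\<^sub>R h y * u y)"
  have mF: "F \<in> borel_measurable lborel"
    unfolding F_def measurable_lborel2 by (intro borel_measurable_times mh mu)
  have Feq: "F y = indicator J y *\<^sub>R \<bar>h y\<bar>" for y
    unfolding F_def u_def by (cases "y \<in> J") (auto simp: sgn_real_def)
  have lim: "(\<lambda>n. integral\<^sup>L lborel (s n)) \<longlonglongrightarrow> integral\<^sup>L lborel F"
  proof (rule integral_dominated_convergence[OF mF ms integrable_norm[OF hint]])
    show "AE x in lborel. (\<lambda>n. s n x) \<longlonglongrightarrow> F x"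
      using AEN by (rule eventually_mono) (auto simp: s_def F_def intro!: tendsto_mult tendsto_const \<phi>l)
    show "AE x in lborel. norm (s n x) \<le> norm (indicator J x *\<^sub>R h x)" for n
    proof (intro AE_I2)
      fix x
      have "\<bar>indicator J x *\<^sub>R h x\<bar> * \<bar>\<phi> n x\<bar> \<le> \<bar>indicator J x *\<^sub>R h x\<bar> * 1"
        by (rule mult_left_mono[OF \<phi>b]) simp
      then show "norm (s n x) \<le> norm (indicator J x *\<^sub>R h x)" by (simp add: s_def abs_mult)
    qed
  qed
  have sb: "integral\<^sup>L lborel (s n) \<le> Q" for n
  proof -
    have "integral\<^sup>L lborel (s n) = (LINT y:J|lborel. h y * \<phi> n y)"
      unfolding s_def set_lebesgue_integral_def by (simp add: mult.assoc)
    also have "\<dots> \<le> \<bar>LINT y:J|lborel. h y * \<phi> n y\<bar>" by simp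
    also have "\<dots> \<le> Q" by (rule T[OF \<phi>c]) (simp add: \<phi>b)
    finally show ?thesis .
  qed
  have "integral\<^sup>L lborel F \<le> Q" by (rule LIMSEQ_le_const2[OF lim]) (use sb in auto)
  moreover have "integral\<^sup>L lborel F = (LINT y:J|lborel. \<bar>h y\<bar>)"
    unfolding set_lebesgue_integral_def Feq ..
  ultimately show ?thesis by simp
qed


lemma main_inj:
  fixes \<alpha> :: real and K :: "real \<Rightarrow> real \<Rightarrow> real"
  assumes a: "0 < \<alpha>" "\<alpha> < 1" and LK: "Lip_Delta K" and nz: "\<forall>x\<in>{0..1}. K x x \<noteq> 0"
    and a0: "0 \<le> a0" "a0 < 1" and small: "2 * lip1 K * (1 - a0) < diag_inf K"
  shows "inj_L1 \<alpha> K a0"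
  unfolding inj_L1_def
proof (intro allI impI)
  fix f g :: "real \<Rightarrow> real"
  assume fi: "set_integrable lborel {a0..1} f" and gi: "set_integrable lborel {a0..1} g"
    and eq: "AE x in lborel. x \<in> {a0..1} \<longrightarrow> frac_op \<alpha> K f x = frac_op \<alpha> K g x"
  define h where "h = (\<lambda>y. f y - g y)"
  define J where "J = {a0..1::real}"
  define m where "m = diag_inf K"
  define L where "L = lip1 K"
  define N where "N = (LINT y:J|lborel. \<bar>h y\<bar>)"
  have m0: "m > 0" unfolding m_def by (rule diag_inf_props(1)[OF LK nz])
  have mle: "m \<le> \<bar>K y y\<bar>" if "y \<in> {0..1}" for y unfolding m_def by (rule diag_inf_props(2)[OF LK nz that])
  have L0: "L \<ge> 0" unfolding L_def by (rule lip1_nonneg[OF LK])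
  have N0: "N \<ge> 0" unfolding N_def set_lebesgue_integral_def
    by (rule Bochner_Integration.integral_nonneg) simp
  have hi: "set_integrable lborel J h" unfolding h_def J_def by (rule set_integral_diff(1)[OF fi gi])
  have Z: "(LINT y:{x..1}|lborel. h y * kk \<alpha> K x y) = 0" if "a0 \<le> x" "x \<le> 1" for x
    unfolding h_def by (rule zero_h[OF a LK a0(1) fi gi eq that])
  define G where "G = (\<lambda>y. h y * K y y)"
  have IB: "\<bar>LINT y:{u..<v}|lborel. G y\<bar> \<le> (2 * L * N) * (v - u)" if "a0 \<le> u" "u < v" "v \<le> 1" for u v
  proof -
    have "\<bar>LINT y:{u..<v}|lborel. h y * K y y\<bar> \<le> 2 * lip1 K * (v - u) * (LINT y:{a0..1}|lborel. \<bar>h y\<bar>)"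
      by (rule interval_bound[OF a LK a0(1) hi[unfolded J_def] Z that])
    also have "\<dots> = (2 * L * N) * (v - u)" by (simp add: L_def N_def J_def)
    finally show ?thesis by (simp add: G_def)
  qed
  have mKJ: "(\<lambda>y. indicator J y *\<^sub>R K y y) \<in> borel_measurable borel"
  proof -
    have "(\<lambda>y. indicator J y * (indicator {0..1} y *\<^sub>R K y y)) \<in> borel_measurable borel"
      by (intro borel_measurable_times borel_measurable_indicator mKd[OF a LK]) (simp add: J_def)
    moreover have "(\<lambda>y. indicator J y * (indicator {0..1} y *\<^sub>R K y y)) = (\<lambda>y. indicator J y *\<^sub>R K y y)"
      using a0 by (auto simp: indicator_def fun_eq_iff J_def)
    ultimately show ?thesis by simp
  qed
  have Gi: "set_integrable lborel J G" unfolding G_def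
  proof (rule GL(1)[OF hi _ mKJ])
    show "AE y in lborel. y \<in> J \<longrightarrow> \<bar>K y y\<bar> \<le> sup_abs K"
      using a0 by (intro AE_I2 impI K_le_sup[OF LK]) (auto simp: J_def)
    show "0 \<le> sup_abs K" by (rule M_nonneg[OF a LK])
  qed (simp add: J_def)
  have T: "\<bar>LINT y:J|lborel. h y * \<phi> y\<bar> \<le> (2 * L * N) * (1 - a0) * (1 / m)"
    if \<phi>c: "continuous_on UNIV \<phi>" and \<phi>b: "\<forall>y. \<bar>\<phi> y\<bar> \<le> 1" for \<phi>
  proof -
    define \<psi> where "\<psi> = (\<lambda>y. \<phi> y / K y y)"
    have Kne: "K y y \<noteq> 0" if "y \<in> J" for y using nz that a0 by (auto simp: J_def)
    have c\<psi>: "continuous_on {a0..1} \<psi>"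
      unfolding \<psi>_def
      by (intro continuous_intros continuous_on_subset[OF \<phi>c] continuous_on_subset[OF K_cont_diag[OF LK]])
         (use Kne a0 in \<open>auto simp: J_def\<close>)
    have b\<psi>: "\<forall>y\<in>{a0..1}. \<bar>\<psi> y\<bar> \<le> 1 / m"
    proof
      fix y assume y: "y \<in> {a0..1}"
      have ym: "m \<le> \<bar>K y y\<bar>" by (rule mle) (use y a0 in auto)
      have "\<bar>\<psi> y\<bar> = \<bar>\<phi> y\<bar> / \<bar>K y y\<bar>" by (simp add: \<psi>_def abs_divide)
      also have "\<dots> \<le> 1 / \<bar>K y y\<bar>" using \<phi>b by (simp add: divide_right_mono)
      also have "\<dots> \<le> 1 / m" using ym m0 by (simp add: frac_le)
      finally show "\<bar>\<psi> y\<bar> \<le> 1 / m" .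
    qed
    have "(LINT y:J|lborel. h y * \<phi> y) = (LINT y:{a0..1}|lborel. G y * \<psi> y)"
      unfolding set_lebesgue_integral_def
    proof (rule Bochner_Integration.integral_cong[OF refl])
      fix y :: real
      show "indicator J y *\<^sub>R (h y * \<phi> y) = indicator {a0..1} y *\<^sub>R (G y * \<psi> y)"
      proof (cases "y \<in> J")
        case True
        then show ?thesis using Kne[OF True] by (simp add: G_def \<psi>_def J_def)
      next
        case False
        then show ?thesis by (simp add: J_def)
      qed
    qed
    also have "\<bar>\<dots>\<bar> \<le> (2 * L * N) * (1 - a0) * (1 / m)"
      by (rule riemann[OF a0(2) Gi[unfolded J_def] IB c\<psi> b\<psi>])
    finally show ?thesis .
  qed
  have AB: "(LINT y:J|lborel. \<bar>h y\<bar>) \<le> (2 * L * N) * (1 - a0) * (1 / m)"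
    by (rule approx_bound[OF hi T])
  have "N \<le> (2 * L * N) * (1 - a0) * (1 / m)"
    using AB unfolding N_def[symmetric] .
  then have le: "N * m \<le> N * (2 * L * (1 - a0))" using m0 by (simp add: field_simps)
  have sm: "2 * L * (1 - a0) < m" using small by (simp add: L_def m_def)
  have N00: "N = 0"
  proof (rule ccontr)
    assume ne: "N \<noteq> 0"
    then have "N > 0" using N0 by simp
    then have "N * (2 * L * (1 - a0)) < N * m" by (rule mult_strict_left_mono[OF sm])
    then show False using le by simp
  qed
  have "AE y in lborel. indicator J y *\<^sub>R \<bar>h y\<bar> = 0"
  proof -
    have ia: "integrable lborel (\<lambda>y. indicator J y *\<^sub>R \<bar>h y\<bar>)"
      using set_integrable_norm[OF hi] unfolding set_integrable_def by simp
    have "(\<integral>y. indicator J y *\<^sub>R \<bar>h y\<bar> \<partial>lborel) = 0" using N00 by (simp add: N_def set_lebesgue_integral_def)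
    then show ?thesis using integral_nonneg_eq_0_iff_AE[OF ia] by simp
  qed
  then show "AE x in lborel. x \<in> {a0..1} \<longrightarrow> f x = g x"
    by (rule eventually_mono) (auto simp: J_def h_def indicator_def split: if_splits)
qed


theorem lemma2p8:
  fixes \<alpha> :: real
  assumes "0 < \<alpha>" and "\<alpha> < 1"
  shows "\<forall>m M L. \<exists>\<eta>. 0 \<le> \<eta> \<and> \<eta> < 1 \<and>
           (\<forall>K. Lip_Delta K \<and> (\<forall>x\<in>{0..1}. K x x \<noteq> 0) \<and>
                diag_inf K = m \<and> sup_abs K = M \<and> lip1 K = L \<longrightarrow>
                (\<forall>\<eta>'. \<eta> \<le> \<eta>' \<and> \<eta>' < 1 \<longrightarrow> inj_L1 \<alpha> K \<eta>'))"
proof (intro allI)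
  fix m M L :: real
  show "\<exists>\<eta>. 0 \<le> \<eta> \<and> \<eta> < 1 \<and>
           (\<forall>K. Lip_Delta K \<and> (\<forall>x\<in>{0..1}. K x x \<noteq> 0) \<and>
                diag_inf K = m \<and> sup_abs K = M \<and> lip1 K = L \<longrightarrow>
                (\<forall>\<eta>'. \<eta> \<le> \<eta>' \<and> \<eta>' < 1 \<longrightarrow> inj_L1 \<alpha> K \<eta>'))"
  proof (cases "m > 0")
    case True
    define \<eta> where "\<eta> = 1 - m / (4 * \<bar>L\<bar> + m)"
    have den: "4 * \<bar>L\<bar> + m > 0" using True by (simp add: add_nonneg_pos)
    have q0: "m / (4 * \<bar>L\<bar> + m) > 0" using True den by simp
    have q1: "m / (4 * \<bar>L\<bar> + m) \<le> 1" using True den by (simp add: divide_le_eq)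
    show ?thesis
    proof (intro exI[of _ \<eta>] conjI allI impI)
      show "0 \<le> \<eta>" using q1 by (simp add: \<eta>_def)
      show "\<eta> < 1" using q0 by (simp add: \<eta>_def)
      fix K \<eta>'
      assume H: "Lip_Delta K \<and> (\<forall>x\<in>{0..1}. K x x \<noteq> 0) \<and> diag_inf K = m \<and> sup_abs K = M \<and> lip1 K = L"
        and e: "\<eta> \<le> \<eta>' \<and> \<eta>' < 1"
      have LK: "Lip_Delta K" and nz: "\<forall>x\<in>{0..1}. K x x \<noteq> 0" and dm: "diag_inf K = m" and lL: "lip1 K = L"
        using H by auto
      have L0: "L \<ge> 0" using lip1_nonneg[OF LK] lL by simp
      have e0: "0 \<le> \<eta>'" using e q1 by (simp add: \<eta>_def)
      have "2 * L * (1 - \<eta>') \<le> 2 * L * (m / (4 * L + m))"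
        using e L0 by (intro mult_left_mono) (auto simp: \<eta>_def)
      also have "\<dots> < m"
      proof -
        have h1: "m * m > 0" using True by simp
        have h2: "L * (m * 2) \<ge> 0" using True L0 by simp
        have h3: "m * (4 * L + m) - 2 * L * m = m * m + L * (m * 2)" by (simp add: algebra_simps)
        have "2 * L * m < m * (4 * L + m)" using h1 h2 h3 by linarith
        then show ?thesis using den L0 by (simp add: divide_less_eq)
      qed
      finally have small: "2 * lip1 K * (1 - \<eta>') < diag_inf K" using lL dm by simp
      show "inj_L1 \<alpha> K \<eta>'"
        by (rule main_inj[OF assms LK nz e0 _ small]) (use e in simp)
    qed
  next
    case False
    show ?thesis
    proof (intro exI[of _ 0] conjI allI impI)
      fix K \<eta>'
      assume H: "Lip_Delta K \<and> (\<forall>x\<in>{0..1}. K x x \<noteq> 0) \<and> diag_inf K = m \<and> sup_abs K = M \<and> lip1 K = L"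
      then have "diag_inf K > 0" using diag_inf_props(1) by blast
      then show "inj_L1 \<alpha> K \<eta>'" using H False by simp
    qed simp_all
  qed
qed


end
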